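(* Let $\psi^*$ be a nondecreasing function on $[-\pi,\pi]$, let $\psi$ be the Stieltjes (Borel) measure on $\partial\mathbb{D}$ generated by $\psi^*$, let $0\le\gamma<1$ and $\zeta_0\in\partial\mathbb{D}$. For a Borel measure $\chi$ on $\partial\mathbb{D}$ put $h_\chi(z)=\int_{\partial\mathbb{D}}\frac{\zeta+z}{\zeta-z}\,d\chi(\zeta)$, $z\in\mathbb{D}$ (so $h_\psi(z)=\int_{-\pi}^{\pi}\frac{e^{it}+z}{e^{it}-z}\,d\psi^*(t)$). The following conditions are equivalent: 1) for every Borel measure $\chi$ on $\partial\mathbb{D}$ with $\chi\prec\psi$ and every $\sigma>1$ there exists a constant $K=K(\gamma,\sigma,\psi)>0$ such that $\sup_{z\in S^*_\sigma(\zeta_0)}|D^{-\gamma}h_\chi(z)|<K$; 2) for every Borel measure $\chi$ on $\partial\mathbb{D}$ with $\chi\prec\psi$ and every $\sigma>1$ there exists a constant $K=K(\gamma,\sigma,\psi)>0$ such that $\sup_{z\in S^*_\sigma(\zeta_0)}|D^{-\gamma}\operatorname{Im}h_\chi(z)|<K$; 3) $$\int_{\partial\mathbb{D}}\frac{d\psi(\zeta)}{|\zeta_0-\zeta|^{1-\gamma}}<\infty.$$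
   Context: $\mathbb{D}=\{|z|<1\}$. For Borel measures $\chi,\psi$ on $\partial\mathbb{D}$, $\chi\prec\psi$ means $\chi(M)\le\psi(M)$ for every Borel set $M\subset\partial\mathbb{D}$. Fractional integral: for $\gamma>0$, $D^{-\gamma}u(z)=\frac1{\Gamma(\gamma)}\int_0^{|z|}(|z|-x)^{\gamma-1}u(xz/|z|)\,dx$ (in the radial variable), $D^0u=u$. Stolz angle: $S_\sigma(\zeta)=\{z\in\mathbb{D}:|1-z\bar\zeta|\le\sigma(1-|z|)\}$, $S^*_\sigma(\zeta)=S_\sigma(\zeta)\cap\{|z-\zeta|<\tfrac12\}$. *)

theory Defs
  imports "HOL-Analysis.Analysis"
begin

text \<open>Right-continuous normalisation of a nondecreasing function on [-pi,pi],
  extended by constants outside; its Lebesgue--Stieltjes measure is the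
  Stieltjes measure of psi* on [-pi,pi].\<close>
definition stieltjes_normalize :: "(real \<Rightarrow> real) \<Rightarrow> real \<Rightarrow> real" where
  "stieltjes_normalize psi t =
     (if t < -pi then psi (-pi)
      else if t < pi then Lim (at_right t) psi
      else psi pi)"

definition circle_stieltjes_measure :: "(real \<Rightarrow> real) \<Rightarrow> complex measure" where
  "circle_stieltjes_measure psi =
     distr (interval_measure (stieltjes_normalize psi)) borel cis"

text \<open>A (positive) Borel measure on the unit circle, viewed as a Borel
  measure on the complex plane concentrated on the circle.\<close>
definition circle_borel_measure :: "complex measure \<Rightarrow> bool" where
  "circle_borel_measure chi \<longleftrightarrow>
     sets chi = sets borel \<and> emeasure chi (UNIV - sphere 0 1) = 0"

definition measure_prec :: "complex measure \<Rightarrow> complex measure \<Rightarrow> bool" where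
  "measure_prec chi \<psi> \<longleftrightarrow>
     (\<forall>M \<in> sets borel. M \<subseteq> sphere 0 1 \<longrightarrow> emeasure chi M \<le> emeasure \<psi> M)"

definition herglotz :: "complex measure \<Rightarrow> complex \<Rightarrow> complex" where
  "herglotz chi z = integral\<^sup>L chi (\<lambda>\<zeta>. (\<zeta> + z) / (\<zeta> - z))"

definition frac_integral :: "real \<Rightarrow> (complex \<Rightarrow> 'a::euclidean_space) \<Rightarrow> complex \<Rightarrow> 'a" where
  "frac_integral \<gamma> u z =
     (if \<gamma> = 0 then u z
      else (1 / Gamma \<gamma>) *\<^sub>R
        integral {0..cmod z}
          (\<lambda>x. ((cmod z - x) powr (\<gamma> - 1)) *\<^sub>R u (of_real x * z / of_real (cmod z))))"

definition stolz :: "real \<Rightarrow> complex \<Rightarrow> complex set" where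
  "stolz \<sigma> \<zeta> = {z. cmod z < 1 \<and> cmod (1 - z * cnj \<zeta>) \<le> \<sigma> * (1 - cmod z)}"

definition stolz_star :: "real \<Rightarrow> complex \<Rightarrow> complex set" where
  "stolz_star \<sigma> \<zeta> = stolz \<sigma> \<zeta> \<inter> {z. cmod (z - \<zeta>) < 1/2}"

end

theory Submission
  imports Defs "HOL-Real_Asymp.Real_Asymp"
begin

definition Irt :: "(real \<Rightarrow> real) \<Rightarrow> real \<Rightarrow> real" where
  "Irt psi t = Inf (psi ` ({t<..} \<inter> {-pi..pi}))"

lemma Irt_bounds:
  assumes m: "mono_on {-pi..pi} psi" and t: "t < pi"
  shows "psi (-pi) \<le> Irt psi t" "Irt psi t \<le> psi pi"
proof -
  have ne: "{t<..} \<inter> {-pi..pi} \<noteq> {}" using t by auto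
  show "psi (-pi) \<le> Irt psi t" unfolding Irt_def
    using ne by (intro cInf_greatest) (auto intro!: mono_onD[OF m])
  show "Irt psi t \<le> psi pi" unfolding Irt_def
    using t by (intro cInf_lower) (auto intro!: bdd_belowI2[where m="psi (-pi)"] mono_onD[OF m])
qed

lemma Irt_lower:
  assumes m: "mono_on {-pi..pi} psi" and "t < y" "y \<in> {-pi..pi}"
  shows "Irt psi t \<le> psi y"
  unfolding Irt_def using assms
  by (intro cInf_lower) (auto intro!: bdd_belowI2[where m="psi (-pi)"] mono_onD[OF m])

lemma Irt_mono:
  assumes m: "mono_on {-pi..pi} psi" and "s \<le> t" "t < pi"
  shows "Irt psi s \<le> Irt psi t"
  unfolding Irt_def using assms
  by (intro cInf_superset_mono) (auto intro!: bdd_belowI2[where m="psi (-pi)"] mono_onD[OF m])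

lemma Irt_tendsto:
  assumes m: "mono_on {-pi..pi} psi" and t: "t < pi" and t2: "-pi \<le> t"
  shows "(psi \<longlongrightarrow> Irt psi t) (at_right t)"
proof -
  have "(psi \<longlongrightarrow> Irt psi t) (at t within ({t<..} \<inter> {-pi..pi}))"
    unfolding Irt_def
    by (rule Lim_right_bound[where K="psi (-pi)"]) (auto intro: mono_onD[OF m])
  moreover have "at t within ({t<..} \<inter> {-pi..pi}) = at t within {t<..}"
    by (rule at_within_nhd[where S="{-pi-1<..<pi}"]) (use t t2 in auto)
  ultimately show ?thesis by simp
qed

lemma snorm_eq:
  assumes m: "mono_on {-pi..pi} psi"
  shows "stieltjes_normalize psi t = (if t < -pi then psi (-pi) else if t < pi then Irt psi t else psi pi)"
  unfolding stieltjes_normalize_def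
  using tendsto_Lim[OF trivial_limit_at_right_real Irt_tendsto[OF m]] by auto

lemma snorm_mono:
  assumes m: "mono_on {-pi..pi} psi"
  shows "mono (stieltjes_normalize psi)"
proof (rule monoI)
  fix s t :: real assume st: "s \<le> t"
  have pp: "psi (-pi) \<le> psi pi" using m by (auto intro!: mono_onD[OF m])
  show "stieltjes_normalize psi s \<le> stieltjes_normalize psi t"
    unfolding snorm_eq[OF m]
    using st pp Irt_bounds[OF m, of s] Irt_bounds[OF m, of t] Irt_mono[OF m, of s t]
    by auto
qed

lemma snorm_rc:
  assumes m: "mono_on {-pi..pi} psi"
  shows "continuous (at_right a) (stieltjes_normalize psi)"
proof -
  let ?F = "stieltjes_normalize psi"
  have mF: "\<And>x y. x \<le> y \<Longrightarrow> ?F x \<le> ?F y" using snorm_mono[OF m] by (auto dest: monoD)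
  note X = continuous_at_right_real_increasing[of "stieltjes_normalize psi" a, OF mF]
  have "\<forall>e>0. \<exists>d>0. ?F (a + d) - ?F a < e"
  proof (intro allI impI)
    fix e :: real assume e: "e > 0"
    show "\<exists>d>0. ?F (a + d) - ?F a < e"
    proof (cases "a < -pi")
      case True
      then have "a + (-pi - a)/2 < -pi" "(-pi - a)/2 > 0" by (simp_all add: field_simps)
      then show ?thesis using True by (intro exI[of _ "(-pi - a)/2"]) (auto simp: snorm_eq[OF m] e)
    next
      case False
      show ?thesis
      proof (cases "a < pi")
        case False
        have "\<not> a < -pi" "\<not> a < pi" "\<not> a + 1 < -pi" "\<not> a + 1 < pi"
          using False pi_gt_zero by linarith+
        then show ?thesis by (intro exI[of _ 1]) (simp add: snorm_eq[OF m] e)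
      next
        case True
        have ne: "psi ` ({a<..} \<inter> {-pi..pi}) \<noteq> {}" using True by auto
        have "Irt psi a < Irt psi a + e" using e by simp
        then obtain v where v: "v \<in> psi ` ({a<..} \<inter> {-pi..pi})" "v < Irt psi a + e"
          using cInf_lessD[OF ne] unfolding Irt_def by blast
        then obtain y where y: "a < y" "y \<in> {-pi..pi}" "psi y < Irt psi a + e" by auto
        define d where "d = (y - a) / 2"
        have d: "d > 0" "a + d < y" using y by (auto simp: d_def field_simps)
        have "?F (a + d) = Irt psi (a+d)" using d y \<open>\<not> a < -pi\<close> by (auto simp: snorm_eq[OF m])
        also have "\<dots> \<le> psi y" using Irt_lower[OF m d(2) y(2)] .
        finally show ?thesis using y d \<open>\<not> a < -pi\<close> True
          by (intro exI[of _ d]) (auto simp: snorm_eq[OF m])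
      qed
    qed
  qed
  then show ?thesis using X by blast
qed

lemma psi_space[simp]: "space (circle_stieltjes_measure psi) = UNIV"
  by (simp add: circle_stieltjes_measure_def)

lemma psi_sets[simp]: "sets (circle_stieltjes_measure psi) = sets borel"
  by (simp add: circle_stieltjes_measure_def)

lemma cis_meas[measurable]: "cis \<in> borel_measurable (interval_measure F)"
  by (subst measurable_cong_sets[OF sets_interval_measure refl]) (intro borel_measurable_continuous_onI continuous_intros)

lemma psi_null: "emeasure (circle_stieltjes_measure psi) (UNIV - sphere 0 1) = 0"
  unfolding circle_stieltjes_measure_def
  by (subst emeasure_distr) (auto simp: vimage_def)

lemma psi_total:
  assumes m: "mono_on {-pi..pi} psi"
  shows "emeasure (circle_stieltjes_measure psi) UNIV = ennreal (psi pi - psi (-pi))"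
proof -
  let ?F = "stieltjes_normalize psi"
  let ?M = "interval_measure ?F"
  have mF: "\<And>x y. x \<le> y \<Longrightarrow> ?F x \<le> ?F y" using snorm_mono[OF m] by (auto dest: monoD)
  have e: "emeasure ?M {- real n <.. real n} = ?F (real n) - ?F (- real n)" for n
    by (rule emeasure_interval_measure_Ioc) (auto intro: mF snorm_rc[OF m])
  have "(\<lambda>n. emeasure ?M {- real n <.. real n}) \<longlonglongrightarrow> emeasure ?M (\<Union>n. {- real n <.. real n})"
    by (rule Lim_emeasure_incseq) (auto simp: incseq_def)
  moreover have "(\<Union>n. {- real n <.. real n}) = UNIV"
  proof safe
    fix x :: real
    obtain n :: nat where "\<bar>x\<bar> < n" using reals_Archimedean2 by blast
    then show "x \<in> (\<Union>n. {- real n <.. real n})" by (intro UN_I[of n]) auto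
  qed auto
  moreover have "(\<lambda>n. emeasure ?M {- real n <.. real n}) \<longlonglongrightarrow> ennreal (psi pi - psi (-pi))"
  proof (rule tendsto_eventually)
    show "\<forall>\<^sub>F n in sequentially. emeasure ?M {- real n <.. real n} = ennreal (psi pi - psi (-pi))"
      using eventually_ge_at_top[of "4::nat"]
    proof eventually_elim
      case (elim n)
      have "real n \<ge> 4" using elim by simp
      then have "real n \<ge> pi" "- real n < - pi" using pi_less_4 by linarith+
      have "?F (real n) = psi pi" "?F (- real n) = psi (-pi)"
      proof -
        have "\<not> real n < -pi" "\<not> real n < pi" "- real n < -pi"
          using \<open>real n \<ge> pi\<close> \<open>- real n < - pi\<close> pi_gt_zero by linarith+
        then show "?F (real n) = psi pi" "?F (- real n) = psi (-pi)"
          by (simp_all add: snorm_eq[OF m])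
      qed
      then show ?case unfolding e by simp
    qed
  qed
  ultimately have "emeasure ?M UNIV = ennreal (psi pi - psi (-pi))"
    using LIMSEQ_unique by metis
  then show ?thesis unfolding circle_stieltjes_measure_def
    by (subst emeasure_distr) auto
qed

lemma psi_finite:
  assumes m: "mono_on {-pi..pi} psi"
  shows "finite_measure (circle_stieltjes_measure psi)"
  by (rule finite_measureI) (simp add: psi_total[OF m])

lemma deriv_rpow:
  fixes \<rho> b x :: real
  assumes "x < \<rho>"
  shows "((\<lambda>x. (\<rho> - x) powr b) has_real_derivative (- b * (\<rho> - x) powr (b - 1))) (at x)"
  using DERIV_fun_powr[of "\<lambda>x. \<rho> - x" "-1" x b] assms
  by (auto intro!: derivative_eq_intros)

lemma weight_has_integral:
  fixes \<gamma> \<rho> b :: real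
  assumes g: "0 < \<gamma>" and b: "0 \<le> b"
  shows "((\<lambda>x. (\<rho> - x) powr (\<gamma> - 1)) has_integral (b powr \<gamma> / \<gamma>)) {\<rho> - b..\<rho>}"
proof -
  let ?f = "\<lambda>x. - ((\<rho> - x) powr \<gamma>) / \<gamma>"
  have "((\<lambda>x. (\<rho> - x) powr (\<gamma> - 1)) has_integral (?f \<rho> - ?f (\<rho> - b))) {\<rho> - b..\<rho>}"
  proof (rule fundamental_theorem_of_calculus_interior)
    show "\<rho> - b \<le> \<rho>" using b by simp
    show "continuous_on {\<rho> - b..\<rho>} ?f"
      using g by (intro continuous_intros continuous_on_powr') auto
    fix x assume x: "x \<in> {\<rho> - b<..<\<rho>}"
    have "((\<lambda>x. (\<rho> - x) powr \<gamma>) has_real_derivative (- \<gamma> * (\<rho> - x) powr (\<gamma> - 1))) (at x)"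
      using x by (intro deriv_rpow) auto
    from DERIV_cmult[OF this, of "-1/\<gamma>"]
    have "(?f has_real_derivative (- (- \<gamma> * (\<rho> - x) powr (\<gamma> - 1)) / \<gamma>)) (at x)"
      by (simp add: field_simps)
    then show "(?f has_vector_derivative (\<rho> - x) powr (\<gamma> - 1)) (at x)"
      using g by (simp add: has_real_derivative_iff_has_vector_derivative)
  qed
  then show ?thesis using g by simp
qed

lemma weight2_has_integral:
  fixes \<gamma> \<rho> a c :: real
  assumes g: "\<gamma> < 1" and ac: "a \<le> c" "c < \<rho>"
  shows "((\<lambda>x. (\<rho> - x) powr (\<gamma> - 2)) has_integral
           (((\<rho> - c) powr (\<gamma> - 1) - (\<rho> - a) powr (\<gamma> - 1)) / (1 - \<gamma>))) {a..c}"
proof -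
  let ?f = "\<lambda>x. (\<rho> - x) powr (\<gamma> - 1) / (1 - \<gamma>)"
  have "((\<lambda>x. (\<rho> - x) powr (\<gamma> - 2)) has_integral (?f c - ?f a)) {a..c}"
  proof (rule fundamental_theorem_of_calculus_interior)
    show "a \<le> c" using ac by simp
    show "continuous_on {a..c} ?f"
      using ac g by (intro continuous_intros) auto
    fix x assume x: "x \<in> {a<..<c}"
    have "((\<lambda>x. (\<rho> - x) powr (\<gamma> - 1)) has_real_derivative (- (\<gamma> - 1) * (\<rho> - x) powr (\<gamma> - 1 - 1))) (at x)"
      using x ac by (intro deriv_rpow) auto
    from DERIV_cmult[OF this, of "1/(1-\<gamma>)"]
    have "(?f has_real_derivative (- (\<gamma> - 1) * (\<rho> - x) powr (\<gamma> - 1 - 1)) / (1 - \<gamma>)) (at x)"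
      by (simp add: field_simps)
    moreover have "- (\<gamma> - 1) * y / (1 - \<gamma>) = y" for y using g by (simp add: field_simps)
    moreover have "\<gamma> - 1 - 1 = \<gamma> - 2" by simp
    ultimately show "(?f has_vector_derivative (\<rho> - x) powr (\<gamma> - 2)) (at x)"
      by (simp add: has_real_derivative_iff_has_vector_derivative)
  qed
  then show ?thesis by (simp add: diff_divide_distrib)
qed

lemma weight_set_integrable:
  fixes \<gamma> \<rho> :: real
  assumes g: "0 < \<gamma>" and r: "0 \<le> \<rho>"
  shows "set_integrable lborel {0..\<rho>} (\<lambda>x. (\<rho> - x) powr (\<gamma> - 1))"
proof -
  have "((\<lambda>x. (\<rho> - x) powr (\<gamma> - 1)) has_integral (\<rho> powr \<gamma> / \<gamma>)) {0..\<rho>}"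
    using weight_has_integral[OF g r, of \<rho>] by simp
  then have "(\<lambda>x. (\<rho> - x) powr (\<gamma> - 1)) absolutely_integrable_on {0..\<rho>}"
    by (intro nonnegative_absolutely_integrable_1) (auto simp: integrable_on_def)
  then have "integrable lebesgue (\<lambda>x. indicator {0..\<rho>} x *\<^sub>R (\<rho> - x) powr (\<gamma> - 1))"
    by (simp add: set_integrable_def)
  then show ?thesis unfolding set_integrable_def
    by (subst integrable_completion[symmetric]) auto
qed

lemma sphere_AE:
  assumes "sets M = sets (borel :: complex measure)" "emeasure M (UNIV - sphere 0 1) = 0"
  shows "AE \<zeta> in M. \<zeta> \<in> sphere 0 1"
proof (rule AE_I')
  show "UNIV - sphere 0 1 \<in> null_sets M"
    using assms by (auto simp: null_sets_def)
qed auto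

lemma fubini_frac:
  fixes M :: "complex measure" and g :: "real \<Rightarrow> complex \<Rightarrow> 'b::euclidean_space"
    and \<gamma> \<rho> B :: real
  assumes fin: "finite_measure M" and sM: "sets M = sets borel"
    and null: "emeasure M (UNIV - sphere 0 1) = 0"
    and meas: "(\<lambda>p. g (fst p) (snd p)) \<in> borel_measurable borel"
    and bnd: "\<And>x \<zeta>. x \<in> {0..\<rho>} \<Longrightarrow> \<zeta> \<in> sphere 0 1 \<Longrightarrow> norm (g x \<zeta>) \<le> B"
    and g: "0 < \<gamma>" and r: "0 \<le> \<rho>"
  shows "integral {0..\<rho>} (\<lambda>x. (\<rho> - x) powr (\<gamma> - 1) *\<^sub>R (\<integral>\<zeta>. g x \<zeta> \<partial>M))
           = (\<integral>\<zeta>. (LINT x:{0..\<rho>}|lborel. (\<rho> - x) powr (\<gamma> - 1) *\<^sub>R g x \<zeta>) \<partial>M)"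
    and "integrable M (\<lambda>\<zeta>. (LINT x:{0..\<rho>}|lborel. (\<rho> - x) powr (\<gamma> - 1) *\<^sub>R g x \<zeta>))"
    and "\<And>\<zeta>. \<zeta> \<in> sphere 0 1 \<Longrightarrow> set_integrable lborel {0..\<rho>} (\<lambda>x. (\<rho> - x) powr (\<gamma> - 1) *\<^sub>R g x \<zeta>)"
proof -
  interpret finite_measure M by (rule fin)
  interpret P: pair_sigma_finite lborel M
    by (intro pair_sigma_finite.intro) (simp_all add: lborel.sigma_finite_measure_axioms sigma_finite_measure_axioms)
  let ?w = "\<lambda>x. (\<rho> - x) powr (\<gamma> - 1)"
  let ?W = "\<lambda>x. indicator {0..\<rho>} x * ?w x"
  define F where "F = (\<lambda>x \<zeta>. indicator {0..\<rho>} x *\<^sub>R (?w x *\<^sub>R g x \<zeta>))"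
  have wi: "integrable lborel ?W"
    using weight_set_integrable[OF g r] by (simp add: set_integrable_def)
  have Wnn: "0 \<le> ?W x" for x by (simp add: indicator_def)
  have setsP: "sets (lborel \<Otimes>\<^sub>M M) = sets (borel \<Otimes>\<^sub>M borel)"
    by (rule sets_pair_measure_cong) (simp_all add: sM)
  have gm: "(\<lambda>p. g (fst p) (snd p)) \<in> borel_measurable (lborel \<Otimes>\<^sub>M M)"
    using meas unfolding measurable_cong_sets[OF setsP refl] borel_prod .
  have Fm: "(\<lambda>p. F (fst p) (snd p)) \<in> borel_measurable (lborel \<Otimes>\<^sub>M M)"
    unfolding F_def using gm by measurable
  have Fm': "case_prod F \<in> borel_measurable (lborel \<Otimes>\<^sub>M M)"
    using Fm by (simp add: case_prod_beta')
  have gx: "(\<lambda>\<zeta>. g x \<zeta>) \<in> borel_measurable M" for x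
    using measurable_compose[OF measurable_Pair1'[of x lborel M] gm] by simp
  have gz: "(\<lambda>x. g x \<zeta>) \<in> borel_measurable lborel" for \<zeta>
    using measurable_compose[OF measurable_Pair2'[of \<zeta> M lborel] gm] sets_eq_imp_space_eq[OF sM] by simp
  have AEs: "AE \<zeta> in M. \<zeta> \<in> sphere 0 1" by (rule sphere_AE[OF sM null])
  have gint: "integrable M (g x)" if "x \<in> {0..\<rho>}" for x
    by (rule integrable_const_bound[where B=B]) (use AEs bnd that gx in auto)
  have nb: "(\<integral>\<zeta>. norm (F x \<zeta>) \<partial>M) \<le> ?W x * (B * measure M (space M))" for x
  proof (cases "x \<in> {0..\<rho>}")
    case True
    have "(\<integral>\<zeta>. norm (F x \<zeta>) \<partial>M) = ?W x * (\<integral>\<zeta>. norm (g x \<zeta>) \<partial>M)"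
      using True by (simp add: F_def abs_mult)
    also have "\<dots> \<le> ?W x * (B * measure M (space M))"
    proof (rule mult_left_mono[OF _ Wnn])
      have "(\<integral>\<zeta>. norm (g x \<zeta>) \<partial>M) \<le> (\<integral>\<zeta>. B \<partial>M)"
        by (rule integral_mono_AE) (use gint[OF True] AEs bnd True in auto)
      then show "(\<integral>\<zeta>. norm (g x \<zeta>) \<partial>M) \<le> B * measure M (space M)"
        by (simp add: mult.commute)
    qed
    finally show ?thesis .
  qed (simp add: F_def)
  have Fint: "integrable (lborel \<Otimes>\<^sub>M M) (case_prod F)"
  proof (rule P.Fubini_integrable)
    show "case_prod F \<in> borel_measurable (lborel \<Otimes>\<^sub>M M)" by (rule Fm')
    show "integrable lborel (\<lambda>x. \<integral>y. norm (case_prod F (x, y)) \<partial>M)"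
    proof (rule Bochner_Integration.integrable_bound[OF integrable_mult_left[OF wi, of "B * measure M (space M)"]])
      show "(\<lambda>x. \<integral>y. norm (case_prod F (x, y)) \<partial>M) \<in> borel_measurable lborel"
        using Fm' by measurable
      show "AE x in lborel. norm (\<integral>y. norm (case_prod F (x, y)) \<partial>M) \<le> norm (?W x * (B * measure M (space M)))"
      proof (rule AE_I2)
        fix x
        have "norm (\<integral>y. norm (case_prod F (x, y)) \<partial>M) = (\<integral>y. norm (F x y) \<partial>M)"
          by (simp add: integral_nonneg_AE)
        also have "\<dots> \<le> norm (?W x * (B * measure M (space M)))"
          by (rule order_trans[OF nb]) simp
        finally show "norm (\<integral>y. norm (case_prod F (x, y)) \<partial>M) \<le> norm (?W x * (B * measure M (space M)))" .
      qed
    qed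
    show "AE x in lborel. integrable M (\<lambda>y. case_prod F (x, y))"
      using gint by (auto simp: F_def indicator_def)
  qed
  have eq: "(\<integral>\<zeta>. (\<integral>x. F x \<zeta> \<partial>lborel) \<partial>M) = (\<integral>x. (\<integral>\<zeta>. F x \<zeta> \<partial>M) \<partial>lborel)"
    by (rule P.Fubini_integral[OF Fint])
  have i1: "integrable lborel (\<lambda>x. \<integral>\<zeta>. F x \<zeta> \<partial>M)"
    by (rule P.integrable_fst[OF Fint])
  have i2: "integrable M (\<lambda>\<zeta>. \<integral>x. F x \<zeta> \<partial>lborel)"
    by (rule P.integrable_snd[OF Fint])
  have inner: "(\<integral>\<zeta>. F x \<zeta> \<partial>M) = indicator {0..\<rho>} x *\<^sub>R (?w x *\<^sub>R (\<integral>\<zeta>. g x \<zeta> \<partial>M))" for x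
    by (simp add: F_def)
  have si: "set_integrable lborel {0..\<rho>} (\<lambda>x. ?w x *\<^sub>R (\<integral>\<zeta>. g x \<zeta> \<partial>M))"
    using i1 unfolding set_integrable_def inner .
  have lhs: "integral {0..\<rho>} (\<lambda>x. ?w x *\<^sub>R (\<integral>\<zeta>. g x \<zeta> \<partial>M)) = (\<integral>x. (\<integral>\<zeta>. F x \<zeta> \<partial>M) \<partial>lborel)"
    using set_borel_integral_eq_integral(2)[OF si] unfolding inner set_lebesgue_integral_def by simp
  show "integral {0..\<rho>} (\<lambda>x. ?w x *\<^sub>R (\<integral>\<zeta>. g x \<zeta> \<partial>M))
           = (\<integral>\<zeta>. (LINT x:{0..\<rho>}|lborel. ?w x *\<^sub>R g x \<zeta>) \<partial>M)"
    using eq lhs by (simp add: set_lebesgue_integral_def F_def)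
  show "integrable M (\<lambda>\<zeta>. (LINT x:{0..\<rho>}|lborel. ?w x *\<^sub>R g x \<zeta>))"
    using i2 unfolding set_lebesgue_integral_def F_def .
  fix \<zeta> :: complex assume z: "\<zeta> \<in> sphere 0 1"
  show "set_integrable lborel {0..\<rho>} (\<lambda>x. ?w x *\<^sub>R g x \<zeta>)"
    unfolding set_integrable_def
  proof (rule Bochner_Integration.integrable_bound[OF integrable_mult_left[OF wi, of B]])
    show "(\<lambda>x. indicator {0..\<rho>} x *\<^sub>R ?w x *\<^sub>R g x \<zeta>) \<in> borel_measurable lborel"
      using gz[of \<zeta>] by measurable
    show "AE x in lborel. norm (indicator {0..\<rho>} x *\<^sub>R ?w x *\<^sub>R g x \<zeta>) \<le> norm (?W x * B)"
    proof (rule AE_I2)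
      fix x
      show "norm (indicator {0..\<rho>} x *\<^sub>R ?w x *\<^sub>R g x \<zeta>) \<le> norm (?W x * B)"
      proof (cases "x \<in> {0..\<rho>}")
        case True
        then have "norm (g x \<zeta>) \<le> B" using bnd z by auto
        then have "norm (g x \<zeta>) * ?w x \<le> \<bar>B\<bar> * ?w x"
          by (intro mult_right_mono) auto
        then show ?thesis using True by (simp add: abs_mult mult.commute)
      qed simp
    qed
  qed
qed

definition Kf :: "complex \<Rightarrow> complex \<Rightarrow> complex" where
  "Kf \<zeta> w = (\<zeta> + w) / (\<zeta> - w)"

definition good :: "complex measure \<Rightarrow> bool" where
  "good chi \<longleftrightarrow> finite_measure chi \<and> sets chi = sets borel \<and> emeasure chi (UNIV - sphere 0 1) = 0"

definition FKc :: "real \<Rightarrow> complex \<Rightarrow> complex \<Rightarrow> complex" where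
  "FKc \<gamma> z \<zeta> = (if \<gamma> = 0 then Kf \<zeta> z else (1 / Gamma \<gamma>) *\<^sub>R
     (LINT x:{0..cmod z}|lborel. (cmod z - x) powr (\<gamma> - 1) *\<^sub>R Kf \<zeta> (of_real x * z / of_real (cmod z))))"

definition FKi :: "real \<Rightarrow> complex \<Rightarrow> complex \<Rightarrow> real" where
  "FKi \<gamma> z \<zeta> = (if \<gamma> = 0 then Im (Kf \<zeta> z) else (1 / Gamma \<gamma>) *\<^sub>R
     (LINT x:{0..cmod z}|lborel. (cmod z - x) powr (\<gamma> - 1) *\<^sub>R Im (Kf \<zeta> (of_real x * z / of_real (cmod z)))))"

lemma Kf_bound:
  assumes z: "\<zeta> \<in> sphere 0 1" and w: "norm w \<le> r" "r < 1"
  shows "cmod (Kf \<zeta> w) \<le> (1 + r) / (1 - r)"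
proof -
  have r0: "0 \<le> r" using w(1) norm_ge_zero[of w] by linarith
  have n1: "cmod (\<zeta> + w) \<le> 1 + r" using norm_triangle_ineq[of \<zeta> w] z w by auto
  have n2: "1 - r \<le> cmod (\<zeta> - w)" using norm_triangle_ineq2[of \<zeta> w] z w by auto
  have "cmod (Kf \<zeta> w) = cmod (\<zeta> + w) / cmod (\<zeta> - w)" by (simp add: Kf_def norm_divide)
  also have "\<dots> \<le> (1 + r) / (1 - r)"
    using n1 n2 w r0 by (intro frac_le) auto
  finally show ?thesis .
qed

lemma Kf_meas: "(\<lambda>p. Kf (snd p) (of_real (fst p) * z / of_real r)) \<in> borel_measurable borel"
  unfolding Kf_def by (intro borel_measurable_divide borel_measurable_add borel_measurable_diff borel_measurable_times borel_measurable_continuous_onI continuous_intros)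

lemma Kf_meas2: "(\<lambda>\<zeta>. Kf \<zeta> w) \<in> borel_measurable borel"
  unfolding Kf_def by (intro borel_measurable_divide borel_measurable_add borel_measurable_diff borel_measurable_times borel_measurable_continuous_onI continuous_intros)

lemma herglotz_Kf: "herglotz chi w = (\<integral>\<zeta>. Kf \<zeta> w \<partial>chi)"
  by (simp add: herglotz_def Kf_def)

lemma good_int_Kf:
  assumes "good chi" "cmod w < 1"
  shows "integrable chi (\<lambda>\<zeta>. Kf \<zeta> w)"
proof -
  interpret finite_measure chi using assms by (simp add: good_def)
  have s: "sets chi = sets borel" using assms by (simp add: good_def)
  have AEs: "AE \<zeta> in chi. \<zeta> \<in> sphere 0 1"
    using assms by (intro sphere_AE) (auto simp: good_def)
  show ?thesis
    by (rule integrable_const_bound[where B="(1 + cmod w) / (1 - cmod w)"])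
       (use AEs Kf_bound assms(2) Kf_meas2 s in \<open>auto simp: measurable_cong_sets[OF s refl]\<close>)
qed

lemma Im_herglotz:
  assumes "good chi" "cmod w < 1"
  shows "Im (herglotz chi w) = (\<integral>\<zeta>. Im (Kf \<zeta> w) \<partial>chi)"
  unfolding herglotz_Kf
  by (rule integral_bounded_linear[OF bounded_linear_Im good_int_Kf[OF assms], symmetric])

lemma arg_norm:
  fixes x :: real and z :: complex
  assumes "x \<in> {0..cmod z}"
  shows "norm (of_real x * z / of_real (cmod z)) \<le> cmod z"
  using assms by (cases "z = 0") (auto simp: norm_mult norm_divide)

lemma rep:
  assumes gd: "good chi" and z: "cmod z < 1" and g: "0 \<le> \<gamma>"
  shows "frac_integral \<gamma> (herglotz chi) z = (\<integral>\<zeta>. FKc \<gamma> z \<zeta> \<partial>chi)"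
    and "integrable chi (FKc \<gamma> z)"
    and "frac_integral \<gamma> (\<lambda>w. Im (herglotz chi w)) z = (\<integral>\<zeta>. FKi \<gamma> z \<zeta> \<partial>chi)"
    and "integrable chi (FKi \<gamma> z)"
    and "\<And>\<zeta>. \<zeta> \<in> sphere 0 1 \<Longrightarrow> FKc \<gamma> z \<zeta> = frac_integral \<gamma> (Kf \<zeta>) z"
    and "\<And>\<zeta>. \<zeta> \<in> sphere 0 1 \<Longrightarrow> FKi \<gamma> z \<zeta> = frac_integral \<gamma> (\<lambda>w. Im (Kf \<zeta> w)) z"
    and "\<And>\<zeta>. \<zeta> \<in> sphere 0 1 \<Longrightarrow> FKi \<gamma> z \<zeta> = Im (FKc \<gamma> z \<zeta>)"
proof -
  have fin: "finite_measure chi" and sM: "sets chi = sets borel"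
    and null: "emeasure chi (UNIV - sphere 0 1) = 0" using gd by (auto simp: good_def)
  let ?r = "cmod z"
  let ?B = "(1 + ?r) / (1 - ?r)"
  have bnd: "cmod (Kf \<zeta> (of_real x * z / of_real ?r)) \<le> ?B" if "x \<in> {0..?r}" "\<zeta> \<in> sphere 0 1" for x \<zeta>
    by (rule Kf_bound[OF that(2) arg_norm[OF that(1)] z])
  have bndi: "norm (Im (Kf \<zeta> (of_real x * z / of_real ?r))) \<le> ?B" if "x \<in> {0..?r}" "\<zeta> \<in> sphere 0 1" for x \<zeta>
    using order_trans[OF abs_Im_le_cmod bnd[OF that]] by simp
  have mi: "(\<lambda>p. Im (Kf (snd p) (of_real (fst p) * z / of_real ?r))) \<in> borel_measurable borel"
    using Kf_meas by measurable
  have fc: "(\<lambda>\<zeta>. Kf \<zeta> z) \<in> borel_measurable chi" using Kf_meas2 sM by (simp add: measurable_cong_sets[OF sM refl])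
  have AEs: "AE \<zeta> in chi. \<zeta> \<in> sphere 0 1" by (rule sphere_AE[OF sM null])
  interpret finite_measure chi by (rule fin)
  have all: "frac_integral \<gamma> (herglotz chi) z = (\<integral>\<zeta>. FKc \<gamma> z \<zeta> \<partial>chi) \<and>
            integrable chi (FKc \<gamma> z) \<and>
            frac_integral \<gamma> (\<lambda>w. Im (herglotz chi w)) z = (\<integral>\<zeta>. FKi \<gamma> z \<zeta> \<partial>chi) \<and>
            integrable chi (FKi \<gamma> z)"
    proof (cases "\<gamma> = 0")
      case True
      have i: "integrable chi (\<lambda>\<zeta>. Kf \<zeta> z)" by (rule good_int_Kf[OF gd z])
      have e1: "FKc 0 z = (\<lambda>\<zeta>. Kf \<zeta> z)" "FKi 0 z = (\<lambda>\<zeta>. Im (Kf \<zeta> z))"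
        by (auto simp: FKc_def FKi_def fun_eq_iff)
      show "frac_integral \<gamma> (herglotz chi) z = (\<integral>\<zeta>. FKc \<gamma> z \<zeta> \<partial>chi) \<and>
            integrable chi (FKc \<gamma> z) \<and>
            frac_integral \<gamma> (\<lambda>w. Im (herglotz chi w)) z = (\<integral>\<zeta>. FKi \<gamma> z \<zeta> \<partial>chi) \<and>
            integrable chi (FKi \<gamma> z)"
        using i Im_herglotz[OF gd z] integrable_bounded_linear[OF bounded_linear_Im i]
        by (simp add: frac_integral_def herglotz_Kf True e1)
    next
      case False
      then have gp: "0 < \<gamma>" using g by simp
      note Fc = fubini_frac[OF fin sM null Kf_meas[of z "cmod z"] bnd gp norm_ge_zero[of z]]
      note Fi = fubini_frac[OF fin sM null mi bndi gp norm_ge_zero[of z]]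
      have eqi: "integral {0..?r} (\<lambda>x. (?r - x) powr (\<gamma> - 1) *\<^sub>R Im (herglotz chi (of_real x * z / of_real ?r)))
          = integral {0..?r} (\<lambda>x. (?r - x) powr (\<gamma> - 1) *\<^sub>R (\<integral>\<zeta>. Im (Kf \<zeta> (of_real x * z / of_real ?r)) \<partial>chi))"
      proof (rule integral_cong)
        fix x assume "x \<in> {0..?r}"
        then have "cmod (of_real x * z / of_real ?r) < 1" using arg_norm z by (meson le_less_trans)
        then show "(?r - x) powr (\<gamma> - 1) *\<^sub>R Im (herglotz chi (of_real x * z / of_real ?r))
          = (?r - x) powr (\<gamma> - 1) *\<^sub>R (\<integral>\<zeta>. Im (Kf \<zeta> (of_real x * z / of_real ?r)) \<partial>chi)"
          using Im_herglotz[OF gd] by simp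
      qed
      have FKc_eq: "FKc \<gamma> z = (\<lambda>\<zeta>. (1 / Gamma \<gamma>) *\<^sub>R
          (LINT x:{0..?r}|lborel. (?r - x) powr (\<gamma> - 1) *\<^sub>R Kf \<zeta> (of_real x * z / of_real ?r)))"
        using False by (simp add: FKc_def fun_eq_iff)
      have FKi_eq: "FKi \<gamma> z = (\<lambda>\<zeta>. (1 / Gamma \<gamma>) *\<^sub>R
          (LINT x:{0..?r}|lborel. (?r - x) powr (\<gamma> - 1) *\<^sub>R Im (Kf \<zeta> (of_real x * z / of_real ?r))))"
        using False by (simp add: FKi_def fun_eq_iff)
      have a1: "frac_integral \<gamma> (herglotz chi) z = (\<integral>\<zeta>. FKc \<gamma> z \<zeta> \<partial>chi)"
        unfolding FKc_eq integral_scaleR_right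
        using False Fc(1) by (simp add: frac_integral_def herglotz_Kf)
      have a2: "integrable chi (FKc \<gamma> z)"
        unfolding FKc_eq using Fc(2) by simp
      have a3: "frac_integral \<gamma> (\<lambda>w. Im (herglotz chi w)) z = (\<integral>\<zeta>. FKi \<gamma> z \<zeta> \<partial>chi)"
        unfolding FKi_eq integral_scaleR_right
        using False by (simp only: frac_integral_def if_False eqi Fi(1))
      have a4: "integrable chi (FKi \<gamma> z)"
        unfolding FKi_eq using Fi(2) by simp
      show ?thesis using a1 a2 a3 a4 by blast
    qed
  then show "frac_integral \<gamma> (herglotz chi) z = (\<integral>\<zeta>. FKc \<gamma> z \<zeta> \<partial>chi)"
       "integrable chi (FKc \<gamma> z)"
       "frac_integral \<gamma> (\<lambda>w. Im (herglotz chi w)) z = (\<integral>\<zeta>. FKi \<gamma> z \<zeta> \<partial>chi)"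
       "integrable chi (FKi \<gamma> z)" by auto
  fix \<zeta> :: complex assume zs: "\<zeta> \<in> sphere 0 1"
  show "FKc \<gamma> z \<zeta> = frac_integral \<gamma> (Kf \<zeta>) z"
  proof (cases "\<gamma> = 0")
    case False
    then have gp: "0 < \<gamma>" using g by simp
    note Fc = fubini_frac(3)[OF fin sM null Kf_meas[of z "cmod z"] bnd gp norm_ge_zero[of z] zs]
    show ?thesis using False set_borel_integral_eq_integral(2)[OF Fc]
      by (simp add: FKc_def frac_integral_def)
  qed (simp add: FKc_def frac_integral_def)
  show "FKi \<gamma> z \<zeta> = frac_integral \<gamma> (\<lambda>w. Im (Kf \<zeta> w)) z"
  proof (cases "\<gamma> = 0")
    case False
    then have gp: "0 < \<gamma>" using g by simp
    note Fi = fubini_frac(3)[OF fin sM null mi bndi gp norm_ge_zero[of z] zs]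
    show ?thesis using False set_borel_integral_eq_integral(2)[OF Fi]
      by (simp add: FKi_def frac_integral_def)
  qed (simp add: FKi_def frac_integral_def)
  show "FKi \<gamma> z \<zeta> = Im (FKc \<gamma> z \<zeta>)"
  proof (cases "\<gamma> = 0")
    case False
    then have gp: "0 < \<gamma>" using g by simp
    note Fc = fubini_frac(3)[OF fin sM null Kf_meas[of z "cmod z"] bnd gp norm_ge_zero[of z] zs]
    have "Im (LINT x:{0..?r}|lborel. (?r - x) powr (\<gamma> - 1) *\<^sub>R Kf \<zeta> (of_real x * z / of_real ?r))
        = (LINT x:{0..?r}|lborel. (?r - x) powr (\<gamma> - 1) *\<^sub>R Im (Kf \<zeta> (of_real x * z / of_real ?r)))"
      unfolding set_lebesgue_integral_def
      using integral_bounded_linear[OF bounded_linear_Im Fc[unfolded set_integrable_def]]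
      by (simp add: mult.assoc)
    then show ?thesis using False by (simp add: FKi_def FKc_def)
  qed (simp add: FKi_def FKc_def)
qed

lemma good_sub:
  assumes m: "mono_on {-pi..pi} psi"
    and c: "circle_borel_measure chi" "measure_prec chi (circle_stieltjes_measure psi)"
  shows "good chi"
proof -
  let ?P = "circle_stieltjes_measure psi"
  have s: "sets chi = sets borel" and n: "emeasure chi (UNIV - sphere 0 1) = 0"
    using c by (auto simp: circle_borel_measure_def)
  have "emeasure chi UNIV = emeasure chi (sphere 0 1 \<union> (UNIV - sphere 0 1))" by simp
  also have "\<dots> = emeasure chi (sphere 0 1)"
    by (rule emeasure_Un_null_set) (use s n in \<open>auto simp: null_sets_def\<close>)
  also have "\<dots> \<le> emeasure ?P (sphere 0 1)"
    using c by (auto simp: measure_prec_def)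
  also have "\<dots> \<le> emeasure ?P UNIV"
    by (rule emeasure_mono) auto
  also have "\<dots> < \<infinity>" by (simp add: psi_total[OF m])
  finally have "emeasure chi UNIV < \<infinity>" .
  then have "finite_measure chi"
    using s by (intro finite_measureI) (simp add: sets_eq_imp_space_eq)
  then show ?thesis using s n by (simp add: good_def)
qed

lemma one_two:
  assumes gd: "good chi" and z: "cmod z < 1" and g: "0 \<le> \<gamma>"
  shows "\<bar>frac_integral \<gamma> (\<lambda>w. Im (herglotz chi w)) z\<bar> \<le> cmod (frac_integral \<gamma> (herglotz chi) z)"
proof -
  note R = rep[OF gd z g]
  have sM: "sets chi = sets borel" and null: "emeasure chi (UNIV - sphere 0 1) = 0"
    using gd by (auto simp: good_def)
  have AEs: "AE \<zeta> in chi. \<zeta> \<in> sphere 0 1" by (rule sphere_AE[OF sM null])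
  have "(\<integral>\<zeta>. FKi \<gamma> z \<zeta> \<partial>chi) = (\<integral>\<zeta>. Im (FKc \<gamma> z \<zeta>) \<partial>chi)"
    by (rule integral_cong_AE) (use R(2,4,7) AEs in auto)
  also have "\<dots> = Im (\<integral>\<zeta>. FKc \<gamma> z \<zeta> \<partial>chi)"
    by (rule integral_bounded_linear[OF bounded_linear_Im R(2)])
  finally show ?thesis using R(1,3) abs_Im_le_cmod by simp
qed

lemma good_null: "good (null_measure (borel :: complex measure))"
  unfolding good_def by (auto intro!: finite_measureI)

lemma Kf_set_integrable:
  assumes z: "cmod z < 1" and zs: "\<zeta> \<in> sphere 0 1" and g: "0 < \<gamma>"
  shows "(\<lambda>x. (cmod z - x) powr (\<gamma> - 1) *\<^sub>R Kf \<zeta> (of_real x * z / of_real (cmod z))) integrable_on {0..cmod z}"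
proof -
  have bnd: "cmod (Kf \<zeta> (of_real x * z / of_real (cmod z))) \<le> (1 + cmod z) / (1 - cmod z)"
    if "x \<in> {0..cmod z}" "\<zeta> \<in> sphere 0 1" for x \<zeta>
    by (rule Kf_bound[OF that(2) arg_norm[OF that(1)] z])
  have "finite_measure (null_measure (borel :: complex measure))" using good_null by (simp add: good_def)
  note F = fubini_frac(3)[OF this _ _ Kf_meas[of z "cmod z"] bnd g norm_ge_zero[of z] zs]
  show ?thesis using set_borel_integral_eq_integral(1)[OF F] by simp
qed

lemma stolz_dist:
  assumes "z \<in> stolz \<sigma> \<zeta>0" "cmod \<zeta>0 = 1"
  shows "cmod (\<zeta>0 - z) \<le> \<sigma> * (1 - cmod z)" "cmod z < 1"
proof -
  have "(\<zeta>0 - z) * cnj \<zeta>0 = 1 - z * cnj \<zeta>0"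
    using assms(2) by (simp add: algebra_simps complex_norm_square[symmetric] mult.commute)
  then have "cmod (\<zeta>0 - z) = cmod (1 - z * cnj \<zeta>0)"
    using assms(2) by (metis complex_mod_cnj mult_cancel_left1 norm_mult)
  then show "cmod (\<zeta>0 - z) \<le> \<sigma> * (1 - cmod z)" using assms(1) by (simp add: stolz_def)
  show "cmod z < 1" using assms(1) by (simp add: stolz_def)
qed

lemma geom:
  assumes zs: "z \<in> stolz \<sigma> \<zeta>0" and z0: "cmod \<zeta>0 = 1" and s: "1 \<le> \<sigma>"
    and ze: "\<zeta> \<in> sphere 0 1" and x: "x \<in> {0..cmod z}"
  defines "w \<equiv> of_real x * z / of_real (cmod z)"
  shows "cmod z - x \<le> cmod (\<zeta> - w)" "cmod (\<zeta>0 - \<zeta>) \<le> (1 + \<sigma>) * cmod (\<zeta> - w)"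
proof -
  note sd = stolz_dist[OF zs z0]
  have nw: "cmod w = x" using x by (cases "z = 0") (auto simp: w_def norm_mult norm_divide)
  have a: "1 - x \<le> cmod (\<zeta> - w)" using norm_triangle_ineq2[of \<zeta> w] ze nw by auto
  then show "cmod z - x \<le> cmod (\<zeta> - w)" using sd(2) by linarith
  have zw: "cmod (z - w) = cmod z - x"
  proof (cases "z = 0")
    case False
    have "z - w = of_real (1 - x / cmod z) * z" using False by (simp add: w_def field_simps)
    then have "cmod (z - w) = \<bar>1 - x / cmod z\<bar> * cmod z" by (simp only: norm_mult norm_of_real)
    also have "\<dots> = cmod z - x" using x False by (simp add: abs_of_nonneg field_simps)
    finally show ?thesis .
  qed (use x in \<open>auto simp: w_def\<close>)
  have "cmod (\<zeta>0 - w) \<le> cmod (\<zeta>0 - z) + cmod (z - w)"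
    using norm_triangle_ineq[of "\<zeta>0 - z" "z - w"] by simp
  also have "\<dots> \<le> \<sigma> * (1 - cmod z) + (cmod z - x)" using sd(1) zw by simp
  also have "\<dots> \<le> \<sigma> * (1 - x)"
  proof -
    have "0 \<le> (\<sigma> - 1) * (cmod z - x)" using s x by (intro mult_nonneg_nonneg) auto
    then show ?thesis by (simp add: algebra_simps)
  qed
  also have "\<dots> \<le> \<sigma> * cmod (\<zeta> - w)" using a s by simp
  finally have b: "cmod (\<zeta>0 - w) \<le> \<sigma> * cmod (\<zeta> - w)" .
  have "cmod (\<zeta>0 - \<zeta>) \<le> cmod (\<zeta>0 - w) + cmod (\<zeta> - w)"
    using norm_triangle_ineq[of "\<zeta>0 - w" "w - \<zeta>"] by (simp add: norm_minus_commute)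
  also have "\<dots> \<le> (1 + \<sigma>) * cmod (\<zeta> - w)" using b by (simp add: algebra_simps)
  finally show "cmod (\<zeta>0 - \<zeta>) \<le> (1 + \<sigma>) * cmod (\<zeta> - w)" .
qed

lemma Kf_le2:
  assumes "\<zeta> \<in> sphere 0 1" "cmod w \<le> 1"
  shows "cmod (Kf \<zeta> w) \<le> 2 / cmod (\<zeta> - w)"
proof -
  have "cmod (\<zeta> + w) \<le> 2" using norm_triangle_ineq[of \<zeta> w] assms by auto
  then show ?thesis by (simp add: Kf_def norm_divide divide_right_mono)
qed

lemma Mj_integral:
  fixes \<gamma> \<rho> d :: real
  assumes g: "0 < \<gamma>" "\<gamma> < 1" and d: "0 < d" and r: "0 \<le> \<rho>"
  shows "\<exists>I. ((\<lambda>x. (\<rho> - x) powr (\<gamma> - 1) / max d (\<rho> - x)) has_integral I) {0..\<rho>}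
             \<and> I \<le> d powr (\<gamma> - 1) * (1 / \<gamma> + 1 / (1 - \<gamma>))"
proof -
  let ?M = "\<lambda>x. (\<rho> - x) powr (\<gamma> - 1) / max d (\<rho> - x)"
  have dd: "d powr \<gamma> / d = d powr (\<gamma> - 1)" using d by (simp add: powr_diff)
  have p1: "0 \<le> d powr (\<gamma> - 1) / \<gamma>" "0 \<le> d powr (\<gamma> - 1) / (1 - \<gamma>)" using g by auto
  show ?thesis
  proof (cases "\<rho> \<le> d")
    case True
    have "((\<lambda>x. (\<rho> - x) powr (\<gamma> - 1) * (1 / d)) has_integral (\<rho> powr \<gamma> / \<gamma> * (1 / d))) {\<rho> - \<rho>..\<rho>}"
      by (rule has_integral_mult_left[OF weight_has_integral[OF g(1) r]])
    then have "((\<lambda>x. (\<rho> - x) powr (\<gamma> - 1) * (1 / d)) has_integral (\<rho> powr \<gamma> / \<gamma> * (1 / d))) {0..\<rho>}"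
      by simp
    then have "(?M has_integral (\<rho> powr \<gamma> / \<gamma> * (1 / d))) {0..\<rho>}"
      by (rule has_integral_eq[rotated]) (use True in auto)
    moreover have "\<rho> powr \<gamma> / \<gamma> * (1 / d) \<le> d powr \<gamma> / \<gamma> * (1 / d)"
      using True g d r by (intro mult_right_mono divide_right_mono powr_mono2) auto
    moreover have "d powr \<gamma> / \<gamma> * (1 / d) = d powr (\<gamma> - 1) / \<gamma>" using dd by (metis times_divide_eq_right divide_divide_eq_left mult.commute mult_1_right)
    ultimately show ?thesis using p1 by (intro exI[of _ "\<rho> powr \<gamma> / \<gamma> * (1 / d)"]) (auto simp: algebra_simps)
  next
    case False
    have i1: "((\<lambda>x. (\<rho> - x) powr (\<gamma> - 2)) has_integral
           (((\<rho> - (\<rho> - d)) powr (\<gamma> - 1) - (\<rho> - 0) powr (\<gamma> - 1)) / (1 - \<gamma>))) {0..\<rho> - d}"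
      by (rule weight2_has_integral) (use g d False in auto)
    have i1': "(?M has_integral ((d powr (\<gamma> - 1) - \<rho> powr (\<gamma> - 1)) / (1 - \<gamma>))) {0..\<rho> - d}"
    proof (rule has_integral_eq[rotated])
      show "((\<lambda>x. (\<rho> - x) powr (\<gamma> - 2)) has_integral ((d powr (\<gamma> - 1) - \<rho> powr (\<gamma> - 1)) / (1 - \<gamma>))) {0..\<rho> - d}"
        using i1 by simp
      fix x assume x: "x \<in> {0..\<rho> - d}"
      then have "max d (\<rho> - x) = \<rho> - x" "\<rho> - x > 0" using d by auto
      then show "(\<rho> - x) powr (\<gamma> - 2) = ?M x"
        using powr_diff[of "\<rho> - x" "\<gamma> - 1" 1] by simp
    qed
    have "((\<lambda>x. (\<rho> - x) powr (\<gamma> - 1) * (1 / d)) has_integral (d powr \<gamma> / \<gamma> * (1 / d))) {\<rho> - d..\<rho>}"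
      by (rule has_integral_mult_left[OF weight_has_integral[OF g(1)]]) (use d in auto)
    then have i2: "(?M has_integral (d powr \<gamma> / \<gamma> * (1 / d))) {\<rho> - d..\<rho>}"
      by (rule has_integral_eq[rotated]) auto
    have "(?M has_integral ((d powr (\<gamma> - 1) - \<rho> powr (\<gamma> - 1)) / (1 - \<gamma>) + d powr \<gamma> / \<gamma> * (1 / d))) {0..\<rho>}"
      by (rule has_integral_combine[OF _ _ i1' i2]) (use d False in auto)
    moreover have "(d powr (\<gamma> - 1) - \<rho> powr (\<gamma> - 1)) / (1 - \<gamma>) \<le> d powr (\<gamma> - 1) / (1 - \<gamma>)"
      using g by (intro divide_right_mono) auto
    moreover have "d powr \<gamma> / \<gamma> * (1 / d) = d powr (\<gamma> - 1) / \<gamma>" using dd by (metis times_divide_eq_right divide_divide_eq_left mult.commute mult_1_right)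
    ultimately show ?thesis by (intro exI) (auto simp: algebra_simps)
  qed
qed

definition Cst :: "real \<Rightarrow> real \<Rightarrow> real" where
  "Cst \<gamma> \<sigma> = (if \<gamma> = 0 then 2 * (1 + \<sigma>) else 2 * (1 + \<sigma>) * (1 / \<gamma> + 1 / (1 - \<gamma>)) / Gamma \<gamma>)"

lemma kernel_upper:
  assumes zs: "z \<in> stolz \<sigma> \<zeta>0" and z0: "cmod \<zeta>0 = 1" and s: "1 \<le> \<sigma>"
    and ze: "\<zeta> \<in> sphere 0 1" and d: "0 < cmod (\<zeta>0 - \<zeta>)"
    and g: "0 \<le> \<gamma>" "\<gamma> < 1"
  shows "cmod (frac_integral \<gamma> (Kf \<zeta>) z) \<le> Cst \<gamma> \<sigma> * cmod (\<zeta>0 - \<zeta>) powr (\<gamma> - 1)"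
proof -
  define dd where "dd = cmod (\<zeta>0 - \<zeta>)"
  define \<rho> where "\<rho> = cmod z"
  have r1: "\<rho> < 1" using stolz_dist[OF zs z0] by (simp add: \<rho>_def)
  have r0: "0 \<le> \<rho>" by (simp add: \<rho>_def)
  have ddp: "0 < dd" using d by (simp add: dd_def)
  have pw: "cmod (Kf \<zeta> (of_real x * z / of_real \<rho>)) \<le> 2 * (1 + \<sigma>) / max dd (\<rho> - x)"
    if x: "x \<in> {0..\<rho>}" for x
  proof -
    let ?w = "of_real x * z / of_real \<rho>"
    note G = geom[OF zs z0 s ze x[unfolded \<rho>_def]]
    have nw: "cmod ?w \<le> 1" using arg_norm[OF x[unfolded \<rho>_def]] r1 by (simp add: \<rho>_def)
    have m: "max dd (\<rho> - x) \<le> (1 + \<sigma>) * cmod (\<zeta> - ?w)"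
    proof -
      have c0: "cmod (\<zeta> - ?w) \<le> (1 + \<sigma>) * cmod (\<zeta> - ?w)"
        using s mult_right_mono[of 1 "1 + \<sigma>" "cmod (\<zeta> - ?w)"] by simp
      show ?thesis using G c0 unfolding dd_def \<rho>_def max_def by auto
    qed
    have mp: "0 < max dd (\<rho> - x)" using ddp by simp
    have "cmod (Kf \<zeta> ?w) \<le> 2 / cmod (\<zeta> - ?w)" by (rule Kf_le2[OF ze nw])
    also have "\<dots> = 2 * (1 + \<sigma>) / ((1 + \<sigma>) * cmod (\<zeta> - ?w))"
      using s by (metis mult_divide_mult_cancel_left_if add_pos_pos zero_less_one less_le_trans order.refl not_one_le_zero mult.commute linorder_not_le)
    also have "\<dots> \<le> 2 * (1 + \<sigma>) / max dd (\<rho> - x)"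
      using m mp s by (intro divide_left_mono) auto
    finally show ?thesis .
  qed
  show ?thesis
  proof (cases "\<gamma> = 0")
    case True
    have x: "\<rho> \<in> {0..\<rho>}" using r0 by simp
    have "of_real \<rho> * z / of_real \<rho> = z" by (cases "z = 0") (auto simp: \<rho>_def)
    then have "cmod (Kf \<zeta> z) \<le> 2 * (1 + \<sigma>) / dd" using pw[OF x] ddp by simp
    moreover have "dd powr (\<gamma> - 1) = 1 / dd" using True ddp by (simp add: powr_minus_divide)
    ultimately show ?thesis using True by (simp add: frac_integral_def Cst_def dd_def)
  next
    case False
    then have gp: "0 < \<gamma>" using g by simp
    let ?f = "\<lambda>x. (\<rho> - x) powr (\<gamma> - 1) *\<^sub>R Kf \<zeta> (of_real x * z / of_real \<rho>)"
    let ?M = "\<lambda>x. (\<rho> - x) powr (\<gamma> - 1) / max dd (\<rho> - x)"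
    obtain I where I: "(?M has_integral I) {0..\<rho>}" "I \<le> dd powr (\<gamma> - 1) * (1 / \<gamma> + 1 / (1 - \<gamma>))"
      using Mj_integral[OF gp g(2) ddp r0] by blast
    have fi: "?f integrable_on {0..\<rho>}"
      using Kf_set_integrable[OF r1[unfolded \<rho>_def] ze gp] by (simp add: \<rho>_def)
    have gi: "((\<lambda>x. 2 * (1 + \<sigma>) * ?M x) has_integral (2 * (1 + \<sigma>) * I)) {0..\<rho>}"
      using has_integral_mult_right[OF I(1), of "2 * (1 + \<sigma>)"] by simp
    have "norm (integral {0..\<rho>} ?f) \<le> integral {0..\<rho>} (\<lambda>x. 2 * (1 + \<sigma>) * ?M x)"
    proof (rule integral_norm_bound_integral[OF fi])
      show "(\<lambda>x. 2 * (1 + \<sigma>) * ?M x) integrable_on {0..\<rho>}" using gi by (auto simp: integrable_on_def)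
      fix x assume x: "x \<in> {0..\<rho>}"
      have "norm (?f x) = (\<rho> - x) powr (\<gamma> - 1) * cmod (Kf \<zeta> (of_real x * z / of_real \<rho>))"
        by simp
      also have "\<dots> \<le> (\<rho> - x) powr (\<gamma> - 1) * (2 * (1 + \<sigma>) / max dd (\<rho> - x))"
        by (rule mult_left_mono[OF pw[OF x]]) simp
      also have "\<dots> = 2 * (1 + \<sigma>) * ?M x" by simp
      finally show "norm (?f x) \<le> 2 * (1 + \<sigma>) * ?M x" .
    qed
    also have "\<dots> = 2 * (1 + \<sigma>) * I" using gi by (rule integral_unique)
    also have "\<dots> \<le> 2 * (1 + \<sigma>) * (dd powr (\<gamma> - 1) * (1 / \<gamma> + 1 / (1 - \<gamma>)))"
      using I(2) s by (intro mult_left_mono) auto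
    finally have B: "norm (integral {0..\<rho>} ?f) \<le> 2 * (1 + \<sigma>) * (dd powr (\<gamma> - 1) * (1 / \<gamma> + 1 / (1 - \<gamma>)))" .
    have Gp: "0 < Gamma \<gamma>" using gp by (rule Gamma_real_pos)
    have "cmod (frac_integral \<gamma> (Kf \<zeta>) z) = norm (integral {0..\<rho>} ?f) / Gamma \<gamma>"
      using False Gp by (simp add: frac_integral_def \<rho>_def)
    also have "\<dots> \<le> 2 * (1 + \<sigma>) * (dd powr (\<gamma> - 1) * (1 / \<gamma> + 1 / (1 - \<gamma>))) / Gamma \<gamma>"
      using B Gp by (intro divide_right_mono) auto
    also have "\<dots> = Cst \<gamma> \<sigma> * dd powr (\<gamma> - 1)"
      using False by (simp add: Cst_def)
    finally show ?thesis by (simp add: dd_def)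
  qed
qed

lemma prec_le:
  assumes c: "circle_borel_measure chi" "measure_prec chi (circle_stieltjes_measure psi)"
  shows "chi \<le> circle_stieltjes_measure psi"
proof -
  let ?P = "circle_stieltjes_measure psi"
  let ?S = "sphere (0::complex) 1"
  have s: "sets chi = sets borel" and n: "emeasure chi (UNIV - ?S) = 0"
    using c by (auto simp: circle_borel_measure_def)
  have sp: "space chi = UNIV" using sets_eq_imp_space_eq[OF s] by simp
  have le: "emeasure chi A \<le> emeasure ?P A" for A
  proof (cases "A \<in> sets borel")
    case True
    have "emeasure chi A \<le> emeasure chi (A \<inter> ?S) + emeasure chi (A - ?S)"
      by (rule order_trans[OF emeasure_mono emeasure_subadditive]) (use True s in auto)
    also have "emeasure chi (A - ?S) \<le> emeasure chi (UNIV - ?S)"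
      by (rule emeasure_mono) (use s in auto)
    also have "emeasure chi (A \<inter> ?S) \<le> emeasure ?P (A \<inter> ?S)"
      using c(2) True by (auto simp: measure_prec_def)
    also have "\<dots> \<le> emeasure ?P A" by (rule emeasure_mono) (use True in auto)
    finally show ?thesis using n by simp
  next
    case False
    then have "A \<notin> sets chi" using s by simp
    then show ?thesis by (simp add: emeasure_notin_sets)
  qed
  show ?thesis unfolding le_measure_iff using s sp le by (auto simp: le_fun_def)
qed

lemma Cst_pos: "0 \<le> \<gamma> \<Longrightarrow> \<gamma> < 1 \<Longrightarrow> 1 \<le> \<sigma> \<Longrightarrow> 0 < Cst \<gamma> \<sigma>"
  unfolding Cst_def by (auto intro!: divide_pos_pos Gamma_real_pos mult_pos_pos add_pos_pos)

lemma inv_meas: "(\<lambda>\<zeta>. inverse (ennreal (cmod (\<zeta>0 - \<zeta>) powr (1 - \<gamma>)))) \<in> borel_measurable borel"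
  by measurable

lemma three_one:
  assumes m: "mono_on {-pi..pi} psi" and g: "0 \<le> \<gamma>" "\<gamma> < 1" and z0: "cmod \<zeta>0 = 1"
    and I: "(\<integral>\<^sup>+ \<zeta>. inverse (ennreal (cmod (\<zeta>0 - \<zeta>) powr (1 - \<gamma>))) \<partial>circle_stieltjes_measure psi) < \<infinity>"
    and s: "1 < \<sigma>"
  shows "\<exists>K>0. \<forall>chi. circle_borel_measure chi \<and> measure_prec chi (circle_stieltjes_measure psi) \<longrightarrow>
        (\<forall>z \<in> stolz_star \<sigma> \<zeta>0. cmod (frac_integral \<gamma> (herglotz chi) z) < K)"
proof -
  let ?P = "circle_stieltjes_measure psi"
  let ?h = "\<lambda>\<zeta>. inverse (ennreal (cmod (\<zeta>0 - \<zeta>) powr (1 - \<gamma>)))"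
  let ?I = "\<integral>\<^sup>+ \<zeta>. ?h \<zeta> \<partial>?P"
  define C where "C = Cst \<gamma> \<sigma>"
  have Cp: "0 < C" using Cst_pos[OF g] s by (simp add: C_def)
  define K where "K = C * enn2real ?I + 1"
  have Kp: "0 < K" using Cp enn2real_nonneg[of ?I] unfolding K_def
    by (metis add_nonneg_pos mult_nonneg_nonneg less_imp_le zero_less_one)
  show ?thesis
  proof (intro exI[of _ K] conjI Kp allI impI ballI)
    fix chi z assume c: "circle_borel_measure chi \<and> measure_prec chi ?P"
      and zs: "z \<in> stolz_star \<sigma> \<zeta>0"
    have gd: "good chi" using good_sub[OF m] c by blast
    have sM: "sets chi = sets borel" and null: "emeasure chi (UNIV - sphere 0 1) = 0"
      using gd by (auto simp: good_def)
    have AEs: "AE \<zeta> in chi. \<zeta> \<in> sphere 0 1" by (rule sphere_AE[OF sM null])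
    have zst: "z \<in> stolz \<sigma> \<zeta>0" using zs by (simp add: stolz_star_def)
    have z1: "cmod z < 1" using stolz_dist(2)[OF zst z0] .
    note R = rep[OF gd z1 g(1)]
    have pt: "ennreal (norm (FKc \<gamma> z \<zeta>)) \<le> ennreal C * ?h \<zeta>" if ze: "\<zeta> \<in> sphere 0 1" for \<zeta>
    proof (cases "\<zeta> = \<zeta>0")
      case True
      then show ?thesis using Cp by (simp add: ennreal_mult_top)
    next
      case False
      then have dp: "0 < cmod (\<zeta>0 - \<zeta>)" by simp
      have "norm (FKc \<gamma> z \<zeta>) \<le> C * cmod (\<zeta>0 - \<zeta>) powr (\<gamma> - 1)"
        using kernel_upper[OF zst z0 _ ze dp g] s R(5)[OF ze] by (simp add: C_def)
      also have "cmod (\<zeta>0 - \<zeta>) powr (\<gamma> - 1) = inverse (cmod (\<zeta>0 - \<zeta>) powr (1 - \<gamma>))"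
        using dp by (simp add: powr_minus[symmetric])
      finally have "ennreal (norm (FKc \<gamma> z \<zeta>)) \<le> ennreal (C * inverse (cmod (\<zeta>0 - \<zeta>) powr (1 - \<gamma>)))"
        by (rule ennreal_leI)
      also have "\<dots> = ennreal C * ?h \<zeta>"
        using Cp dp by (simp add: ennreal_mult inverse_ennreal)
      finally show ?thesis .
    qed
    have "(\<integral>\<^sup>+ \<zeta>. norm (FKc \<gamma> z \<zeta>) \<partial>chi) \<le> (\<integral>\<^sup>+ \<zeta>. ennreal C * ?h \<zeta> \<partial>chi)"
      by (rule nn_integral_mono_AE) (use AEs pt in auto)
    also have "\<dots> = ennreal C * (\<integral>\<^sup>+ \<zeta>. ?h \<zeta> \<partial>chi)"
      by (rule nn_integral_cmult) (simp add: measurable_cong_sets[OF sM refl])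
    also have "(\<integral>\<^sup>+ \<zeta>. ?h \<zeta> \<partial>chi) \<le> ?I"
      by (rule nn_integral_mono_measure) (use sM prec_le c in auto)
    finally have X: "(\<integral>\<^sup>+ \<zeta>. norm (FKc \<gamma> z \<zeta>) \<partial>chi) \<le> ennreal C * ?I"
      by (simp add: mult_left_mono)
    have "ennreal (cmod (frac_integral \<gamma> (herglotz chi) z)) \<le> (\<integral>\<^sup>+ \<zeta>. norm (FKc \<gamma> z \<zeta>) \<partial>chi)"
      unfolding R(1) by (rule integral_norm_bound_ennreal[OF R(2)])
    also note X
    also have "ennreal C * ?I = ennreal (C * enn2real ?I)"
      using I Cp by (simp add: ennreal_mult ennreal_enn2real)
    finally have "cmod (frac_integral \<gamma> (herglotz chi) z) \<le> C * enn2real ?I"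
      using Cp by (subst (asm) ennreal_le_iff) auto
    also have "\<dots> < K" by (simp add: K_def)
    finally show "cmod (frac_integral \<gamma> (herglotz chi) z) < K" .
  qed
qed

lemma Im_Kf:
  assumes "cmod \<zeta> = 1"
  shows "Im (Kf \<zeta> w) = 2 * Im (w * cnj \<zeta>) / (cmod (\<zeta> - w))\<^sup>2"
proof -
  have "Kf \<zeta> w = (\<zeta> + w) * cnj (\<zeta> - w) / of_real ((cmod (\<zeta> - w))\<^sup>2)"
    unfolding Kf_def by (rule complex_div_cnj)
  moreover have "Im ((\<zeta> + w) * cnj (\<zeta> - w)) = 2 * Im (w * cnj \<zeta>)"
    by (simp add: algebra_simps)
  ultimately show ?thesis by (simp add: Im_divide_of_real)
qed

lemma u_facts:
  fixes t \<epsilon> :: real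
  assumes t: "0 < t" "t \<le> 1/8" and e: "\<bar>\<epsilon>\<bar> = 1"
  defines "c \<equiv> Complex (sqrt (1 - t\<^sup>2)) (\<epsilon> * t)"
  shows "cmod c = 1" "cmod (1 - c) \<le> 3/2 * t" "1/2 \<le> sqrt (1 - t\<^sup>2)" "1 - t\<^sup>2 \<le> sqrt (1 - t\<^sup>2)"
proof -
  have t2: "t\<^sup>2 \<le> 1/64" using power_mono[OF t(2), of 2] t by (simp add: power2_eq_square)
  have e2: "\<epsilon>\<^sup>2 = 1"
  proof -
    have "\<epsilon>\<^sup>2 = \<bar>\<epsilon>\<bar>\<^sup>2" by simp
    then show ?thesis using e by simp
  qed
  show "cmod c = 1" using t2 e2 by (simp add: c_def cmod_def power_mult_distrib)
  show a: "1 - t\<^sup>2 \<le> sqrt (1 - t\<^sup>2)"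
  proof -
    have nn: "0 \<le> 1 - t\<^sup>2" using t2 by simp
    have "1 - t\<^sup>2 = sqrt (1 - t\<^sup>2) * sqrt (1 - t\<^sup>2)" using nn by simp
    also have "\<dots> \<le> sqrt (1 - t\<^sup>2) * 1"
      using nn by (intro mult_left_mono) (auto simp: real_sqrt_le_1_iff)
    finally show ?thesis by simp
  qed
  show "1/2 \<le> sqrt (1 - t\<^sup>2)" using a t2 by linarith
  have "(cmod (1 - c))\<^sup>2 = (1 - sqrt (1 - t\<^sup>2))\<^sup>2 + t\<^sup>2"
    using e2 by (simp add: c_def cmod_def power_mult_distrib)
  also have "\<dots> \<le> (t\<^sup>2)\<^sup>2 + t\<^sup>2"
    using a t2 by (intro add_right_mono power_mono) (auto simp: real_sqrt_le_1_iff)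
  also have "\<dots> \<le> (3/2 * t)\<^sup>2"
  proof -
    have "(t\<^sup>2)\<^sup>2 = t\<^sup>2 * t\<^sup>2" by (simp add: power2_eq_square)
    also have "\<dots> \<le> t\<^sup>2 * (1/64)" using t2 by (intro mult_left_mono) auto
    finally have "(t\<^sup>2)\<^sup>2 \<le> t\<^sup>2 * (1/64)" .
    moreover have "(3/2 * t)\<^sup>2 = 9/4 * t\<^sup>2" by (simp add: power_mult_distrib power2_eq_square)
    moreover have "0 \<le> t\<^sup>2" by simp
    ultimately show ?thesis by linarith
  qed
  finally show "cmod (1 - c) \<le> 3/2 * t"
    by (rule power2_le_imp_le) (use t in simp)
qed

lemma unit_rot:
  fixes a b :: complex
  assumes "cmod b = 1"
  shows "cmod (a * cnj b) = cmod a"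
  using assms by (simp add: norm_mult)

lemma zeta_facts:
  fixes t \<epsilon> :: real and \<zeta>0 \<zeta> :: complex
  assumes t: "0 < t" "t \<le> 1/8" and e: "\<bar>\<epsilon>\<bar> = 1" and z0: "cmod \<zeta>0 = 1" and ze: "cmod \<zeta> = 1"
    and dA: "cmod (\<zeta>0 - \<zeta>) \<le> 1/8" and sA: "\<epsilon> * Im (\<zeta> * cnj \<zeta>0) \<le> 0"
  defines "u \<equiv> \<zeta>0 * Complex (sqrt (1 - t\<^sup>2)) (\<epsilon> * t)"
  defines "y \<equiv> u * cnj \<zeta>"
  shows "cmod y = 1" "cmod (\<zeta> - u) = cmod (1 - y)" "cmod (\<zeta> - u) / 2 \<le> \<epsilon> * Im y" "t / 2 \<le> \<epsilon> * Im y"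
    "cmod (\<zeta> - u) \<le> cmod (\<zeta>0 - \<zeta>) + 3/2 * t" "cmod u = 1"
proof -
  define a where "a = sqrt (1 - t\<^sup>2)"
  define c where "c = Complex a (\<epsilon> * t)"
  note U = u_facts[OF t e]
  have c1: "cmod c = 1" using U(1) by (simp add: c_def a_def)
  have a2: "1/2 \<le> a" using U(3) by (simp add: a_def)
  have e2: "\<epsilon> * \<epsilon> = 1"
  proof -
    have "\<epsilon> * \<epsilon> = \<bar>\<epsilon>\<bar> * \<bar>\<epsilon>\<bar>" by (simp add: abs_mult_self_eq)
    then show ?thesis using e by simp
  qed
  define v where "v = \<zeta> * cnj \<zeta>0"
  have v1: "cmod v = 1" using ze z0 by (simp add: v_def norm_mult)
  have pq: "(Re v)\<^sup>2 + (Im v)\<^sup>2 = 1" using v1 by (simp add: cmod_def)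
  have dv: "cmod (\<zeta>0 - \<zeta>) = cmod (1 - v)"
  proof -
    have "(\<zeta>0 - \<zeta>) * cnj \<zeta>0 = 1 - v"
      using z0 by (simp add: v_def algebra_simps complex_norm_square[symmetric])
    then show ?thesis using unit_rot[OF z0, of "\<zeta>0 - \<zeta>"] by simp
  qed
  have "(cmod (1 - v))\<^sup>2 = 2 - 2 * Re v"
    using pq by (simp only: cmod_power2) (simp add: power2_eq_square algebra_simps)
  moreover have "(cmod (1 - v))\<^sup>2 \<le> (1/8)\<^sup>2" using dA dv by (intro power_mono) auto
  ultimately have p: "127/128 \<le> Re v" by (simp add: power2_eq_square)
  have q: "\<bar>Im v\<bar> \<le> 1/8" using abs_Im_le_cmod[of "1 - v"] dA dv by simp
  have sq: "\<epsilon> * Im v \<le> 0" using sA by (simp add: v_def)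
  have yv: "y = c * cnj v"
    by (simp add: y_def u_def c_def a_def v_def algebra_simps)
  have Re_y: "Re y = a * Re v + \<epsilon> * t * Im v" by (simp add: yv c_def)
  have Im_y0: "Im y = \<epsilon> * t * Re v - a * Im v" by (simp add: yv c_def)
  have "\<epsilon> * Im y = (\<epsilon> * \<epsilon>) * (t * Re v) - a * (\<epsilon> * Im v)"
    unfolding Im_y0 by (simp add: algebra_simps)
  then have Im_y: "\<epsilon> * Im y = t * Re v - a * (\<epsilon> * Im v)" using e2 by simp
  show y1: "cmod y = 1" using c1 v1 by (simp add: yv norm_mult)
  have aq: "0 \<le> - (a * (\<epsilon> * Im v))" using sq a2 by (simp add: mult_nonneg_nonpos)
  show ey: "t / 2 \<le> \<epsilon> * Im y"
  proof -
    have "t / 2 \<le> t * Re v" using p t by (simp add: mult_left_mono[of "1/2" "Re v" t, simplified] )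
    then show ?thesis using Im_y aq by linarith
  qed
  have ey0: "0 \<le> \<epsilon> * Im y" using ey t by linarith
  have Rey0: "0 \<le> Re y"
  proof -
    have a1: "a \<le> 1" unfolding a_def using t by (simp add: real_sqrt_le_1_iff)
    have "\<bar>\<epsilon> * t * Im v\<bar> \<le> t * (1/8)" using e t q by (simp add: abs_mult mult_left_mono)
    moreover have "1/2 * (127/128) \<le> a * Re v" using a2 p by (intro mult_mono) auto
    ultimately show ?thesis unfolding Re_y using t by linarith
  qed
  have Rey1: "Re y \<le> 1" using abs_Re_le_cmod[of y] y1 by simp
  have yy: "(Re y)\<^sup>2 + (Im y)\<^sup>2 = 1" using y1 by (simp add: cmod_def)
  have "(cmod (1 - y))\<^sup>2 = 2 - 2 * Re y"
    using yy by (simp only: cmod_power2) (simp add: power2_eq_square algebra_simps)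
  moreover have "(Re y)\<^sup>2 \<le> Re y" using Rey0 Rey1 by (simp add: power2_eq_square mult_left_le_one_le)
  moreover have "(\<epsilon> * Im y)\<^sup>2 = (Im y)\<^sup>2"
  proof -
    have "\<epsilon>\<^sup>2 = 1" using e2 by (simp add: power2_eq_square)
    then show ?thesis by (simp add: power_mult_distrib)
  qed
  moreover have "(cmod (1 - y) / 2)\<^sup>2 = (cmod (1 - y))\<^sup>2 / 4" by (simp add: power_divide)
  moreover have "0 \<le> (cmod (1 - y))\<^sup>2" by simp
  ultimately have "(cmod (1 - y) / 2)\<^sup>2 \<le> (\<epsilon> * Im y)\<^sup>2"
    using yy by linarith
  then have by2: "cmod (1 - y) / 2 \<le> \<epsilon> * Im y" by (rule power2_le_imp_le) (rule ey0)
  have bz: "cmod (\<zeta> - u) = cmod (1 - y)"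
  proof -
    have "(\<zeta> - u) * cnj \<zeta> = 1 - y"
      using ze by (simp add: y_def algebra_simps complex_norm_square[symmetric])
    then show ?thesis using unit_rot[OF ze, of "\<zeta> - u"] by simp
  qed
  show "cmod (\<zeta> - u) = cmod (1 - y)" by (rule bz)
  show "cmod (\<zeta> - u) / 2 \<le> \<epsilon> * Im y" using by2 bz by simp
  have "cmod (\<zeta>0 - u) = cmod (\<zeta>0 * (1 - c))"
    by (simp add: u_def c_def a_def right_diff_distrib)
  also have "\<dots> = cmod (1 - c)" using z0 by (simp add: norm_mult)
  finally have "cmod (\<zeta>0 - u) = cmod (1 - c)" .
  then have "cmod (\<zeta>0 - u) \<le> 3/2 * t" using U(2) by (simp add: c_def a_def)
  moreover have "cmod (\<zeta> - u) \<le> cmod (\<zeta> - \<zeta>0) + cmod (\<zeta>0 - u)"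
    using norm_triangle_ineq[of "\<zeta> - \<zeta>0" "\<zeta>0 - u"] by simp
  ultimately show "cmod (\<zeta> - u) \<le> cmod (\<zeta>0 - \<zeta>) + 3/2 * t" by (simp add: norm_minus_commute)
  show "cmod u = 1" using z0 c1 by (simp add: u_def c_def a_def norm_mult)
qed

lemma pw_lower:
  fixes t \<epsilon> x :: real and \<zeta>0 \<zeta> :: complex
  assumes t: "0 < t" "t \<le> 1/8" and e: "\<bar>\<epsilon>\<bar> = 1" and z0: "cmod \<zeta>0 = 1" and ze: "cmod \<zeta> = 1"
    and dA: "cmod (\<zeta>0 - \<zeta>) \<le> 1/8" and sA: "\<epsilon> * Im (\<zeta> * cnj \<zeta>0) \<le> 0"
  defines "u \<equiv> \<zeta>0 * Complex (sqrt (1 - t\<^sup>2)) (\<epsilon> * t)"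
  shows "x \<in> {0..1 - t/2} \<Longrightarrow> 0 \<le> \<epsilon> * Im (Kf \<zeta> (of_real x * u))"
    and "x \<in> {1 - t/2 - cmod (\<zeta> - u)..1 - t/2} \<Longrightarrow> 1 / (18 * cmod (\<zeta> - u)) \<le> \<epsilon> * Im (Kf \<zeta> (of_real x * u))"
    and "t / 2 \<le> cmod (\<zeta> - u)" and "cmod (\<zeta> - u) \<le> cmod (\<zeta>0 - \<zeta>) + 3/2 * t"
    and "cmod (\<zeta> - u) \<le> 1 - t/2 - 1/2"
proof -
  define y where "y = u * cnj \<zeta>"
  define b where "b = cmod (\<zeta> - u)"
  note F = zeta_facts[OF t e z0 ze dA sA, folded u_def, folded y_def]
  have e2: "\<epsilon> * \<epsilon> = 1"
  proof -
    have "\<epsilon> * \<epsilon> = \<bar>\<epsilon>\<bar> * \<bar>\<epsilon>\<bar>" by (simp add: abs_mult_self_eq)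
    then show ?thesis using e by simp
  qed
  have EK: "\<epsilon> * Im (Kf \<zeta> (of_real x * u)) = 2 * x * (\<epsilon> * Im y) / (cmod (\<zeta> - of_real x * u))\<^sup>2" for x
  proof -
    have "Im (of_real x * u * cnj \<zeta>) = x * Im y" by (simp add: y_def mult.assoc)
    then show ?thesis using Im_Kf[OF ze, of "of_real x * u"] by (simp add: algebra_simps)
  qed
  have ey0: "0 \<le> \<epsilon> * Im y" using F(4) t by linarith
  show "x \<in> {0..1 - t/2} \<Longrightarrow> 0 \<le> \<epsilon> * Im (Kf \<zeta> (of_real x * u))"
    unfolding EK using ey0 by auto
  have bge: "\<epsilon> * Im y \<le> b"
  proof -
    have "\<epsilon> * Im y \<le> \<bar>\<epsilon> * Im y\<bar>" by simp
    also have "\<dots> = \<bar>Im (1 - y)\<bar>" using e by (simp add: abs_mult)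
    also have "\<dots> \<le> cmod (1 - y)" by (rule abs_Im_le_cmod)
    finally show ?thesis using F(2) by (simp add: b_def)
  qed
  show tb: "t / 2 \<le> cmod (\<zeta> - u)" using F(4) bge by (simp add: b_def)
  show "cmod (\<zeta> - u) \<le> cmod (\<zeta>0 - \<zeta>) + 3/2 * t" using F(5) .
  show bsmall: "cmod (\<zeta> - u) \<le> 1 - t/2 - 1/2" using F(5) dA t by linarith
  assume x: "x \<in> {1 - t/2 - cmod (\<zeta> - u)..1 - t/2}"
  have bp: "0 < b" unfolding b_def using tb t by linarith
  have x12: "1/2 \<le> x" "x < 1" using x bsmall t by (auto simp: b_def)
  have nw: "cmod (of_real x * u) = x" using F(6) x12 by (simp add: norm_mult)
  have "1 - x \<le> cmod (\<zeta> - of_real x * u)"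
    using norm_triangle_ineq2[of \<zeta> "of_real x * u"] ze nw by simp
  then have pos: "0 < cmod (\<zeta> - of_real x * u)" using x12 by linarith
  have "cmod (\<zeta> - of_real x * u) \<le> cmod (\<zeta> - u) + cmod (u - of_real x * u)"
    using norm_triangle_ineq[of "\<zeta> - u" "u - of_real x * u"] by simp
  also have "cmod (u - of_real x * u) = 1 - x"
  proof -
    have "u - of_real x * u = of_real (1 - x) * u" by (simp add: algebra_simps)
    then have "cmod (u - of_real x * u) = \<bar>1 - x\<bar> * cmod u" by (simp only: norm_mult norm_of_real)
    then show ?thesis using F(6) x12 by simp
  qed
  finally have "cmod (\<zeta> - of_real x * u) \<le> b + (1 - x)" by (simp add: b_def)
  also have "\<dots> \<le> 3 * b" using x tb by (simp add: b_def)
  finally have le3: "cmod (\<zeta> - of_real x * u) \<le> 3 * b" .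
  have num: "b / 2 \<le> 2 * x * (\<epsilon> * Im y)"
  proof -
    have "b / 2 \<le> \<epsilon> * Im y" using F(3) by (simp add: b_def)
    also have "\<dots> \<le> 2 * x * (\<epsilon> * Im y)" using x12 ey0 by (simp add: mult_right_mono[of 1 "2 * x", simplified])
    finally show ?thesis .
  qed
  have den: "(cmod (\<zeta> - of_real x * u))\<^sup>2 \<le> (3 * b)\<^sup>2" using le3 pos by (intro power_mono) auto
  have "(b / 2) / (3 * b)\<^sup>2 \<le> 2 * x * (\<epsilon> * Im y) / (cmod (\<zeta> - of_real x * u))\<^sup>2"
  proof (rule frac_le[OF _ num _ den])
    show "0 \<le> 2 * x * (\<epsilon> * Im y)" using x12 ey0 by simp
    show "0 < (cmod (\<zeta> - of_real x * u))\<^sup>2" using pos by simp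
  qed
  moreover have "(b / 2) / (3 * b)\<^sup>2 = 1 / (18 * b)" using bp by (simp add: power2_eq_square field_simps)
  ultimately show "1 / (18 * cmod (\<zeta> - u)) \<le> \<epsilon> * Im (Kf \<zeta> (of_real x * u))"
    unfolding EK by (simp add: b_def)
qed

definition cL :: "real \<Rightarrow> real" where
  "cL \<gamma> = (if \<gamma> = 0 then 1/18 else 1 / (18 * \<gamma> * Gamma \<gamma>))"

lemma cL_pos: "0 \<le> \<gamma> \<Longrightarrow> 0 < cL \<gamma>"
  by (auto simp: cL_def intro!: mult_pos_pos Gamma_real_pos)

lemma FKi_lower:
  fixes t \<epsilon> \<gamma> :: real and \<zeta>0 \<zeta> :: complex
  assumes t: "0 < t" "t \<le> 1/8" and e: "\<bar>\<epsilon>\<bar> = 1" and z0: "cmod \<zeta>0 = 1" and ze: "cmod \<zeta> = 1"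
    and dA: "cmod (\<zeta>0 - \<zeta>) \<le> 1/8" and sA: "\<epsilon> * Im (\<zeta> * cnj \<zeta>0) \<le> 0"
    and g: "0 \<le> \<gamma>" "\<gamma> < 1"
  defines "u \<equiv> \<zeta>0 * Complex (sqrt (1 - t\<^sup>2)) (\<epsilon> * t)"
  shows "cL \<gamma> * cmod (\<zeta> - u) powr (\<gamma> - 1)
           \<le> \<epsilon> * frac_integral \<gamma> (\<lambda>w. Im (Kf \<zeta> w)) (of_real (1 - t/2) * u)"
proof -
  note P = pw_lower[OF t e z0 ze dA sA, folded u_def]
  define \<rho> where "\<rho> = 1 - t/2"
  define b where "b = cmod (\<zeta> - u)"
  define z where "z = of_real \<rho> * u"
  have u1: "cmod u = 1" using zeta_facts(6)[OF t e z0 ze dA sA] by (simp add: u_def)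
  have r: "0 < \<rho>" "\<rho> < 1" using t by (auto simp: \<rho>_def)
  have zr: "cmod z = \<rho>" using u1 r by (simp add: z_def norm_mult)
  have arg: "of_real x * z / of_real \<rho> = of_real x * u" for x
    using r by (simp add: z_def)
  have bp: "0 < b" using P(3) t unfolding b_def by linarith
  have bsm: "b \<le> \<rho>" using P(5) t by (simp add: b_def \<rho>_def)
  show ?thesis
  proof (cases "\<gamma> = 0")
    case True
    have x: "\<rho> \<in> {1 - t/2 - cmod (\<zeta> - u)..1 - t/2}" using bp by (simp add: \<rho>_def b_def)
    have "1 / (18 * b) \<le> \<epsilon> * Im (Kf \<zeta> z)" using P(2)[OF x] by (simp add: z_def b_def)
    moreover have "cL \<gamma> * b powr (\<gamma> - 1) = 1 / (18 * b)"
      using True bp by (simp add: cL_def powr_minus_divide)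
    ultimately show ?thesis using True by (simp add: frac_integral_def z_def b_def \<rho>_def)
  next
    case False
    then have gp: "0 < \<gamma>" using g by simp
    have Gp: "0 < Gamma \<gamma>" using gp by (rule Gamma_real_pos)
    let ?w = "\<lambda>x. (\<rho> - x) powr (\<gamma> - 1)"
    let ?f = "\<lambda>x. ?w x * Im (Kf \<zeta> (of_real x * u))"
    let ?g = "\<lambda>x. indicator {\<rho> - b..\<rho>} x * (?w x * (1 / (18 * b)))"
    have fr: "frac_integral \<gamma> (\<lambda>w. Im (Kf \<zeta> w)) z = (1 / Gamma \<gamma>) * integral {0..\<rho>} ?f"
      using False by (simp add: frac_integral_def zr arg)
    have fi: "?f integrable_on {0..\<rho>}"
    proof -
      have "(\<lambda>x. (cmod z - x) powr (\<gamma> - 1) *\<^sub>R Kf \<zeta> (of_real x * z / of_real (cmod z))) integrable_on {0..cmod z}"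
        by (rule Kf_set_integrable) (use zr r ze gp in auto)
      then have "(Im \<circ> (\<lambda>x. (cmod z - x) powr (\<gamma> - 1) *\<^sub>R Kf \<zeta> (of_real x * z / of_real (cmod z)))) integrable_on {0..cmod z}"
        by (rule integrable_linear) (rule bounded_linear_Im)
      then show ?thesis by (simp add: zr arg o_def)
    qed
    have efi: "(\<lambda>x. \<epsilon> * ?f x) integrable_on {0..\<rho>}"
      using integrable_on_mult_right[OF fi, of \<epsilon>] by simp
    have gh: "(?g has_integral (b powr \<gamma> / \<gamma> * (1 / (18 * b)))) {0..\<rho>}"
    proof (rule has_integral_on_superset)
      have "((\<lambda>x. ?w x * (1 / (18 * b))) has_integral (b powr \<gamma> / \<gamma> * (1 / (18 * b)))) {\<rho> - b..\<rho>}"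
        by (rule has_integral_mult_left[OF weight_has_integral[OF gp]]) (use bp in simp)
      then show "(?g has_integral (b powr \<gamma> / \<gamma> * (1 / (18 * b)))) {\<rho> - b..\<rho>}"
        by (rule has_integral_eq[rotated]) simp
      show "\<And>x. x \<notin> {\<rho> - b..\<rho>} \<Longrightarrow> ?g x = 0" by simp
      show "{\<rho> - b..\<rho>} \<subseteq> {0..\<rho>}" using bsm by auto
    qed
    have "integral {0..\<rho>} ?g \<le> integral {0..\<rho>} (\<lambda>x. \<epsilon> * ?f x)"
    proof (rule integral_le)
      show "?g integrable_on {0..\<rho>}" using gh by (auto simp: integrable_on_def)
      show "(\<lambda>x. \<epsilon> * ?f x) integrable_on {0..\<rho>}" by (rule efi)
      fix x assume x: "x \<in> {0..\<rho>}"
      have wn: "0 \<le> ?w x" by simp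
      show "?g x \<le> \<epsilon> * ?f x"
      proof (cases "x \<in> {\<rho> - b..\<rho>}")
        case True
        then have "1 / (18 * b) \<le> \<epsilon> * Im (Kf \<zeta> (of_real x * u))"
          using P(2) by (simp add: \<rho>_def b_def)
        then have "?w x * (1 / (18 * b)) \<le> ?w x * (\<epsilon> * Im (Kf \<zeta> (of_real x * u)))"
          by (rule mult_left_mono[OF _ wn])
        then show ?thesis using True by (simp add: algebra_simps)
      next
        case False
        have "0 \<le> \<epsilon> * Im (Kf \<zeta> (of_real x * u))" using P(1) x by (simp add: \<rho>_def)
        then have "0 \<le> ?w x * (\<epsilon> * Im (Kf \<zeta> (of_real x * u)))" using wn by simp
        then show ?thesis using False by (simp add: algebra_simps)
      qed
    qed
    then have L: "b powr \<gamma> / \<gamma> * (1 / (18 * b)) \<le> \<epsilon> * integral {0..\<rho>} ?f"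
      using integral_unique[OF gh] by simp
    have "cL \<gamma> * b powr (\<gamma> - 1) = (1 / Gamma \<gamma>) * (b powr \<gamma> / \<gamma> * (1 / (18 * b)))"
      using False bp by (simp add: cL_def powr_diff field_simps)
    also have "\<dots> \<le> (1 / Gamma \<gamma>) * (\<epsilon> * integral {0..\<rho>} ?f)"
      using L Gp by (intro mult_left_mono) auto
    also have "\<dots> = \<epsilon> * frac_integral \<gamma> (\<lambda>w. Im (Kf \<zeta> w)) z" using fr by simp
    finally show ?thesis by (simp add: b_def z_def \<rho>_def)
  qed
qed

lemma z_in_stolz:
  fixes t \<epsilon> :: real and \<zeta>0 :: complex
  assumes t: "0 < t" "t \<le> 1/8" and e: "\<bar>\<epsilon>\<bar> = 1" and z0: "cmod \<zeta>0 = 1"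
  defines "u \<equiv> \<zeta>0 * Complex (sqrt (1 - t\<^sup>2)) (\<epsilon> * t)"
  shows "of_real (1 - t/2) * u \<in> stolz_star 5 \<zeta>0"
proof -
  define c where "c = Complex (sqrt (1 - t\<^sup>2)) (\<epsilon> * t)"
  note U = u_facts[OF t e, folded c_def]
  define \<rho> where "\<rho> = 1 - t/2"
  have r: "0 < \<rho>" "\<rho> < 1" using t by (auto simp: \<rho>_def)
  have zr: "cmod (of_real \<rho> * u) = \<rho>" using U(1) z0 r by (simp add: u_def c_def[symmetric] norm_mult)
  have zc: "of_real \<rho> * u * cnj \<zeta>0 = of_real \<rho> * c"
    using z0 by (simp add: u_def c_def[symmetric] complex_norm_square[symmetric] algebra_simps)
  have "cmod (1 - of_real \<rho> * c) \<le> cmod (1 - of_real \<rho>) + cmod (of_real \<rho> * (1 - c))"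
    using norm_triangle_ineq[of "1 - of_real \<rho>" "of_real \<rho> * (1 - c)"] by (simp add: algebra_simps)
  also have "\<dots> = (1 - \<rho>) + \<rho> * cmod (1 - c)"
  proof -
    have "cmod (1 - of_real \<rho> :: complex) = \<bar>1 - \<rho>\<bar>" by (metis norm_of_real of_real_1 of_real_diff)
    then show ?thesis using r by (simp add: norm_mult)
  qed
  also have "\<dots> \<le> t/2 + 1 * (3/2 * t)"
    using U(2) r by (intro add_mono mult_mono) (auto simp: \<rho>_def)
  finally have A: "cmod (1 - of_real \<rho> * c) \<le> 2 * t" by simp
  have B: "cmod (of_real \<rho> * u - \<zeta>0) = cmod (1 - of_real \<rho> * c)"
  proof -
    have "cmod (of_real \<rho> * u - \<zeta>0) = cmod ((of_real \<rho> * u - \<zeta>0) * cnj \<zeta>0)"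
      using z0 by (simp add: norm_mult)
    also have "(of_real \<rho> * u - \<zeta>0) * cnj \<zeta>0 = of_real \<rho> * c - 1"
      using zc z0 by (simp add: algebra_simps complex_norm_square[symmetric])
    finally show ?thesis by (simp add: norm_minus_commute)
  qed
  have S1: "cmod (1 - of_real \<rho> * u * cnj \<zeta>0) \<le> 5 * (1 - cmod (of_real \<rho> * u))"
    unfolding zc zr using A t by (simp add: \<rho>_def)
  have S2: "cmod (of_real \<rho> * u - \<zeta>0) < 1/2" unfolding B using A t by simp
  have "of_real \<rho> * u \<in> stolz_star 5 \<zeta>0"
    unfolding stolz_star_def stolz_def using S1 S2 zr r by simp
  then show ?thesis by (simp add: \<rho>_def)
qed

definition Aset :: "complex \<Rightarrow> real \<Rightarrow> complex set" where
  "Aset \<zeta>0 \<epsilon> = {\<zeta>. cmod \<zeta> = 1 \<and> cmod (\<zeta>0 - \<zeta>) \<le> 1/8 \<and> \<epsilon> * Im (\<zeta> * cnj \<zeta>0) \<le> 0}"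

lemma Aset_borel[measurable]: "Aset \<zeta>0 \<epsilon> \<in> sets borel"
  unfolding Aset_def by measurable

lemma arcs_infinite:
  assumes m: "mono_on {-pi..pi} psi" and g: "0 \<le> \<gamma>" "\<gamma> < 1"
    and inf: "\<not> (\<integral>\<^sup>+ \<zeta>. inverse (ennreal (cmod (\<zeta>0 - \<zeta>) powr (1 - \<gamma>))) \<partial>circle_stieltjes_measure psi) < \<infinity>"
  shows "\<exists>\<epsilon>. \<bar>\<epsilon>\<bar> = 1 \<and> (\<integral>\<^sup>+ \<zeta>. inverse (ennreal (cmod (\<zeta>0 - \<zeta>) powr (1 - \<gamma>))) * indicator (Aset \<zeta>0 \<epsilon>) \<zeta> \<partial>circle_stieltjes_measure psi) = \<infinity>"
proof (rule ccontr)
  let ?P = "circle_stieltjes_measure psi"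
  let ?h = "\<lambda>\<zeta>. inverse (ennreal (cmod (\<zeta>0 - \<zeta>) powr (1 - \<gamma>)))"
  assume "\<not> ?thesis"
  then have f1: "(\<integral>\<^sup>+ \<zeta>. ?h \<zeta> * indicator (Aset \<zeta>0 1) \<zeta> \<partial>?P) < \<infinity>"
    and f2: "(\<integral>\<^sup>+ \<zeta>. ?h \<zeta> * indicator (Aset \<zeta>0 (-1)) \<zeta> \<partial>?P) < \<infinity>"
    by (auto simp: less_top[symmetric])
  define C8 where "C8 = inverse ((1/8::real) powr (1 - \<gamma>))"
  have AEs: "AE \<zeta> in ?P. \<zeta> \<in> sphere 0 1" by (rule sphere_AE[OF psi_sets psi_null])
  have pt: "?h \<zeta> \<le> ?h \<zeta> * indicator (Aset \<zeta>0 1) \<zeta> + ?h \<zeta> * indicator (Aset \<zeta>0 (-1)) \<zeta> + ennreal C8"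
    if zs: "\<zeta> \<in> sphere 0 1" for \<zeta>
  proof (cases "cmod (\<zeta>0 - \<zeta>) \<le> 1/8")
    case True
    show ?thesis
    proof (cases "Im (\<zeta> * cnj \<zeta>0) \<le> 0")
      case True
      then have "\<zeta> \<in> Aset \<zeta>0 1" using zs \<open>cmod (\<zeta>0 - \<zeta>) \<le> 1/8\<close> by (simp add: Aset_def)
      then show ?thesis by (simp add: add.assoc)
    next
      case False
      then have "\<zeta> \<in> Aset \<zeta>0 (-1)" using zs \<open>cmod (\<zeta>0 - \<zeta>) \<le> 1/8\<close> by (simp add: Aset_def)
      then show ?thesis by (simp add: add.commute add.left_commute)
    qed
  next
    case False
    then have dp: "1/8 < cmod (\<zeta>0 - \<zeta>)" by simp
    have p1: "0 < (1/8::real) powr (1 - \<gamma>)" by simp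
    have "(1/8::real) powr (1 - \<gamma>) \<le> cmod (\<zeta>0 - \<zeta>) powr (1 - \<gamma>)"
      using dp g by (intro powr_mono2) auto
    then have "inverse (cmod (\<zeta>0 - \<zeta>) powr (1 - \<gamma>)) \<le> C8"
      unfolding C8_def using p1 by (intro le_imp_inverse_le) auto
    moreover have "?h \<zeta> = ennreal (inverse (cmod (\<zeta>0 - \<zeta>) powr (1 - \<gamma>)))"
      using dp by (subst inverse_ennreal) auto
    ultimately have "?h \<zeta> \<le> ennreal C8" by (simp add: ennreal_leI)
    then show ?thesis by (simp add: add_increasing)
  qed
  have "(\<integral>\<^sup>+ \<zeta>. ?h \<zeta> \<partial>?P) \<le> (\<integral>\<^sup>+ \<zeta>. ?h \<zeta> * indicator (Aset \<zeta>0 1) \<zeta> + ?h \<zeta> * indicator (Aset \<zeta>0 (-1)) \<zeta> + ennreal C8 \<partial>?P)"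
    by (rule nn_integral_mono_AE) (use AEs pt in auto)
  also have "\<dots> = (\<integral>\<^sup>+ \<zeta>. ?h \<zeta> * indicator (Aset \<zeta>0 1) \<zeta> \<partial>?P) + (\<integral>\<^sup>+ \<zeta>. ?h \<zeta> * indicator (Aset \<zeta>0 (-1)) \<zeta> \<partial>?P)
      + (\<integral>\<^sup>+ \<zeta>. ennreal C8 \<partial>?P)"
    by (subst nn_integral_add; (subst nn_integral_add)?) (auto simp: measurable_cong_sets[OF psi_sets refl])
  also have "\<dots> < \<infinity>"
    using f1 f2 psi_total[OF m] by (simp add: ennreal_mult_less_top)
  finally show False using inf by simp
qed

lemma bound_t:
  assumes m: "mono_on {-pi..pi} psi" and g: "0 \<le> \<gamma>" "\<gamma> < 1" and z0: "cmod \<zeta>0 = 1"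
    and e: "\<bar>\<epsilon>\<bar> = 1"
    and HK: "\<forall>chi. circle_borel_measure chi \<and> measure_prec chi (circle_stieltjes_measure psi) \<longrightarrow>
        (\<forall>z \<in> stolz_star 5 \<zeta>0. \<bar>frac_integral \<gamma> (\<lambda>w. Im (herglotz chi w)) z\<bar> < K)"
    and t: "0 < t" "t \<le> 1/8"
  shows "(\<integral>\<^sup>+ \<zeta>. indicator (Aset \<zeta>0 \<epsilon>) \<zeta> * ennreal (cL \<gamma> * (cmod (\<zeta>0 - \<zeta>) + 3/2 * t) powr (\<gamma> - 1))
           \<partial>circle_stieltjes_measure psi) \<le> ennreal K"
proof -
  let ?P = "circle_stieltjes_measure psi"
  let ?A = "Aset \<zeta>0 \<epsilon>"
  define chi where "chi = density ?P (indicator ?A)"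
  have schi: "sets chi = sets borel" by (simp add: chi_def)
  have emchi: "emeasure chi M = (\<integral>\<^sup>+ x. indicator ?A x * indicator M x \<partial>?P)" if "M \<in> sets borel" for M
    unfolding chi_def by (rule emeasure_density) (use that in \<open>auto simp: measurable_cong_sets[OF psi_sets refl]\<close>)
  have Sb: "UNIV - sphere 0 1 \<in> sets (borel :: complex measure)"
    by (rule borel_open) (intro open_Diff open_UNIV closed_sphere)
  have le: "emeasure chi M \<le> emeasure ?P M" if M: "M \<in> sets borel" for M
  proof -
    have "emeasure chi M \<le> (\<integral>\<^sup>+ x. indicator M x \<partial>?P)"
      unfolding emchi[OF M] by (intro nn_integral_mono) (auto simp: indicator_def)
    also have "\<dots> = emeasure ?P M" using M by simp
    finally show ?thesis .
  qed
  have cb: "circle_borel_measure chi"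
    unfolding circle_borel_measure_def using schi le[OF Sb] psi_null[of psi] by simp
  have pr: "measure_prec chi ?P"
    unfolding measure_prec_def using le by blast
  have AEA: "AE \<zeta> in chi. \<zeta> \<in> ?A"
  proof (rule AE_I')
    have "emeasure chi (UNIV - ?A) = (\<integral>\<^sup>+ x. indicator ?A x * indicator (UNIV - ?A) x \<partial>?P)"
      by (rule emchi) simp
    also have "\<dots> = (\<integral>\<^sup>+ x. 0 \<partial>?P)"
      by (intro nn_integral_cong) (simp add: indicator_def)
    also have "\<dots> = 0" by simp
    finally show "UNIV - ?A \<in> null_sets chi" using schi by (simp add: null_sets_def)
  qed (use schi in \<open>auto simp: sets_eq_imp_space_eq[OF schi]\<close>)
  have gd: "good chi" using good_sub[OF m cb pr] .
  define u where "u = \<zeta>0 * Complex (sqrt (1 - t\<^sup>2)) (\<epsilon> * t)"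
  define z where "z = of_real (1 - t/2) * u"
  have zs: "z \<in> stolz_star 5 \<zeta>0" unfolding z_def u_def by (rule z_in_stolz[OF t e z0])
  have z1: "cmod z < 1" using zs by (simp add: stolz_star_def stolz_def)
  note R = rep[OF gd z1 g(1)]
  have lt: "\<bar>frac_integral \<gamma> (\<lambda>w. Im (herglotz chi w)) z\<bar> < K" using HK cb pr zs by blast
  have ptw: "cL \<gamma> * (cmod (\<zeta>0 - \<zeta>) + 3/2 * t) powr (\<gamma> - 1) \<le> \<epsilon> * FKi \<gamma> z \<zeta>" if zA: "\<zeta> \<in> ?A" for \<zeta>
  proof -
    have ze: "cmod \<zeta> = 1" and dA: "cmod (\<zeta>0 - \<zeta>) \<le> 1/8" and sA: "\<epsilon> * Im (\<zeta> * cnj \<zeta>0) \<le> 0"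
      using zA by (auto simp: Aset_def)
    note P = pw_lower[OF t e z0 ze dA sA, folded u_def]
    have bp: "0 < cmod (\<zeta> - u)" using P(3) t by linarith
    have "(cmod (\<zeta>0 - \<zeta>) + 3/2 * t) powr (\<gamma> - 1) \<le> cmod (\<zeta> - u) powr (\<gamma> - 1)"
      using P(4) bp g by (intro powr_mono2') auto
    then have "cL \<gamma> * (cmod (\<zeta>0 - \<zeta>) + 3/2 * t) powr (\<gamma> - 1) \<le> cL \<gamma> * cmod (\<zeta> - u) powr (\<gamma> - 1)"
      using cL_pos[OF g(1)] by (intro mult_left_mono) auto
    also have "\<dots> \<le> \<epsilon> * frac_integral \<gamma> (\<lambda>w. Im (Kf \<zeta> w)) z"
      using FKi_lower[OF t e z0 ze dA sA g] by (simp add: z_def u_def)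
    also have "\<dots> = \<epsilon> * FKi \<gamma> z \<zeta>" using R(6) ze by simp
    finally show ?thesis .
  qed
  have nnF: "AE \<zeta> in chi. 0 \<le> \<epsilon> * FKi \<gamma> z \<zeta>"
    using AEA
  proof eventually_elim
    case (elim \<zeta>)
    have "0 \<le> cL \<gamma> * (cmod (\<zeta>0 - \<zeta>) + 3/2 * t) powr (\<gamma> - 1)"
      using cL_pos[OF g(1)] by simp
    then show ?case using ptw[OF elim] by linarith
  qed
  have intF: "integrable chi (\<lambda>\<zeta>. \<epsilon> * FKi \<gamma> z \<zeta>)" using R(4) by simp
  have "(\<integral>\<^sup>+ \<zeta>. indicator ?A \<zeta> * ennreal (cL \<gamma> * (cmod (\<zeta>0 - \<zeta>) + 3/2 * t) powr (\<gamma> - 1)) \<partial>?P)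
      = (\<integral>\<^sup>+ \<zeta>. ennreal (cL \<gamma> * (cmod (\<zeta>0 - \<zeta>) + 3/2 * t) powr (\<gamma> - 1)) \<partial>chi)"
    unfolding chi_def by (rule nn_integral_density[symmetric]) (auto simp: measurable_cong_sets[OF psi_sets refl])
  also have "\<dots> \<le> (\<integral>\<^sup>+ \<zeta>. ennreal (\<epsilon> * FKi \<gamma> z \<zeta>) \<partial>chi)"
    by (rule nn_integral_mono_AE) (use AEA ptw in \<open>auto intro: ennreal_leI\<close>)
  also have "\<dots> = ennreal (\<integral>\<zeta>. \<epsilon> * FKi \<gamma> z \<zeta> \<partial>chi)"
    by (rule nn_integral_eq_integral[OF intF nnF])
  also have "(\<integral>\<zeta>. \<epsilon> * FKi \<gamma> z \<zeta> \<partial>chi) = \<epsilon> * frac_integral \<gamma> (\<lambda>w. Im (herglotz chi w)) z"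
    using R(3) by simp
  also have "\<dots> \<le> \<bar>frac_integral \<gamma> (\<lambda>w. Im (herglotz chi w)) z\<bar>"
  proof -
    have "\<epsilon> * frac_integral \<gamma> (\<lambda>w. Im (herglotz chi w)) z \<le> \<bar>\<epsilon> * frac_integral \<gamma> (\<lambda>w. Im (herglotz chi w)) z\<bar>"
      by (rule abs_ge_self)
    also have "\<dots> = \<bar>frac_integral \<gamma> (\<lambda>w. Im (herglotz chi w)) z\<bar>" using e by (simp add: abs_mult)
    finally show ?thesis .
  qed
  finally show ?thesis using lt by (meson ennreal_leI less_imp_le order_trans)
qed

lemma two_three:
  assumes m: "mono_on {-pi..pi} psi" and g: "0 \<le> \<gamma>" "\<gamma> < 1" and z0: "cmod \<zeta>0 = 1"
    and H: "\<forall>\<sigma>>1. \<exists>K>0. \<forall>chi. circle_borel_measure chi \<and> measure_prec chi (circle_stieltjes_measure psi) \<longrightarrow>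
        (\<forall>z \<in> stolz_star \<sigma> \<zeta>0. \<bar>frac_integral \<gamma> (\<lambda>w. Im (herglotz chi w)) z\<bar> < K)"
  shows "(\<integral>\<^sup>+ \<zeta>. inverse (ennreal (cmod (\<zeta>0 - \<zeta>) powr (1 - \<gamma>))) \<partial>circle_stieltjes_measure psi) < \<infinity>"
proof (rule ccontr)
  let ?P = "circle_stieltjes_measure psi"
  let ?h = "\<lambda>\<zeta>. inverse (ennreal (cmod (\<zeta>0 - \<zeta>) powr (1 - \<gamma>)))"
  assume inf: "\<not> ?thesis"
  obtain \<epsilon> where e: "\<bar>\<epsilon>\<bar> = 1"
    and Ainf: "(\<integral>\<^sup>+ \<zeta>. ?h \<zeta> * indicator (Aset \<zeta>0 \<epsilon>) \<zeta> \<partial>?P) = \<infinity>"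
    using arcs_infinite[OF m g inf] by blast
  let ?A = "Aset \<zeta>0 \<epsilon>"
  have five: "(1::real) < 5" by simp
  obtain K where HK: "\<forall>chi. circle_borel_measure chi \<and> measure_prec chi ?P \<longrightarrow>
        (\<forall>z \<in> stolz_star 5 \<zeta>0. \<bar>frac_integral \<gamma> (\<lambda>w. Im (herglotz chi w)) z\<bar> < K)"
    using H[rule_format, OF five] by blast
  define c where "c = cL \<gamma>"
  have cp: "0 < c" using cL_pos[OF g(1)] by (simp add: c_def)
  define f where "f = (\<lambda>(n::nat) \<zeta>. indicator ?A \<zeta> * ennreal (c * (cmod (\<zeta>0 - \<zeta>) + 1 / (8 * (real n + 1))) powr (\<gamma> - 1)))"
  define uu where "uu = (\<lambda>\<zeta>. indicator ?A \<zeta> * (ennreal c * ?h \<zeta>))"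
  have fb: "integral\<^sup>N ?P (f n) \<le> ennreal K" for n
  proof -
    define t where "t = 1 / (12 * (real n + 1))"
    have t: "0 < t" "t \<le> 1/8" by (auto simp: t_def field_simps)
    have eq: "3/2 * t = 1 / (8 * (real n + 1))" by (simp add: t_def field_simps)
    show ?thesis using bound_t[OF m g z0 e HK t, unfolded eq] by (simp only: f_def c_def)
  qed
  have fm: "f n \<in> borel_measurable ?P" for n
    unfolding f_def by (simp add: measurable_cong_sets[OF psi_sets refl])
  have inc: "incseq f"
  proof (rule incseq_SucI, rule le_funI)
    fix n \<zeta>
    have a: "cmod (\<zeta>0 - \<zeta>) + 1 / (8 * (real (Suc n) + 1)) \<le> cmod (\<zeta>0 - \<zeta>) + 1 / (8 * (real n + 1))"
      by (simp add: field_simps)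
    have b: "0 < cmod (\<zeta>0 - \<zeta>) + 1 / (8 * (real (Suc n) + 1))"
      by (simp add: add_nonneg_pos)
    have "(cmod (\<zeta>0 - \<zeta>) + 1 / (8 * (real n + 1))) powr (\<gamma> - 1)
          \<le> (cmod (\<zeta>0 - \<zeta>) + 1 / (8 * (real (Suc n) + 1))) powr (\<gamma> - 1)"
      using a b g by (intro powr_mono2') auto
    then show "f n \<zeta> \<le> f (Suc n) \<zeta>"
      unfolding f_def using cp by (auto intro!: mult_left_mono ennreal_leI simp: indicator_def)
  qed
  have lim: "(\<lambda>n. f n \<zeta>) \<longlonglongrightarrow> uu \<zeta>" for \<zeta>
  proof (cases "\<zeta> \<in> ?A")
    case False
    then show ?thesis by (simp add: f_def uu_def)
  next
    case True
    show ?thesis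
    proof (cases "\<zeta> = \<zeta>0")
      case True
      have "filterlim (\<lambda>n::nat. (1 / (8 * (real n + 1))) powr (\<gamma> - 1)) at_top at_top"
        using g(2) by real_asymp
      then have "filterlim (\<lambda>n::nat. c * (1 / (8 * (real n + 1))) powr (\<gamma> - 1)) at_top at_top"
        by (rule filterlim_tendsto_pos_mult_at_top[OF tendsto_const cp])
      then have "(\<lambda>n::nat. ennreal (c * (1 / (8 * (real n + 1))) powr (\<gamma> - 1))) \<longlonglongrightarrow> top"
        by (simp add: ennreal_tendsto_top_eq_at_top)
      then show ?thesis using \<open>\<zeta> \<in> ?A\<close> True cp by (simp add: f_def uu_def ennreal_mult_top)
    next
      case False
      then have dp: "0 < cmod (\<zeta>0 - \<zeta>)" by simp
      have "(\<lambda>n::nat. (cmod (\<zeta>0 - \<zeta>) + 1 / (8 * (real n + 1))) powr (\<gamma> - 1)) \<longlonglongrightarrow> cmod (\<zeta>0 - \<zeta>) powr (\<gamma> - 1)"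
        using dp by real_asymp
      then have "(\<lambda>n::nat. ennreal (c * (cmod (\<zeta>0 - \<zeta>) + 1 / (8 * (real n + 1))) powr (\<gamma> - 1)))
            \<longlonglongrightarrow> ennreal (c * cmod (\<zeta>0 - \<zeta>) powr (\<gamma> - 1))"
        by (intro tendsto_ennrealI tendsto_mult_left)
      moreover have "ennreal (c * cmod (\<zeta>0 - \<zeta>) powr (\<gamma> - 1)) = ennreal c * ?h \<zeta>"
        using dp cp by (simp add: inverse_ennreal ennreal_mult powr_minus[symmetric])
      ultimately show ?thesis using \<open>\<zeta> \<in> ?A\<close> by (simp add: f_def uu_def)
    qed
  qed
  have "(\<lambda>n. integral\<^sup>N ?P (f n)) \<longlonglongrightarrow> integral\<^sup>N ?P uu"
    by (rule nn_integral_LIMSEQ[OF inc fm lim])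
  then have "integral\<^sup>N ?P uu \<le> ennreal K"
    by (rule LIMSEQ_le_const2) (use fb in blast)
  moreover have "integral\<^sup>N ?P uu = ennreal c * (\<integral>\<^sup>+ \<zeta>. ?h \<zeta> * indicator ?A \<zeta> \<partial>?P)"
  proof -
    have "integral\<^sup>N ?P uu = (\<integral>\<^sup>+ \<zeta>. ennreal c * (?h \<zeta> * indicator ?A \<zeta>) \<partial>?P)"
      unfolding uu_def by (intro nn_integral_cong) (simp add: ac_simps)
    also have "\<dots> = ennreal c * (\<integral>\<^sup>+ \<zeta>. ?h \<zeta> * indicator ?A \<zeta> \<partial>?P)"
      by (rule nn_integral_cmult) (simp add: measurable_cong_sets[OF psi_sets refl])
    finally show ?thesis .
  qed
  ultimately show False using Ainf cp by (simp add: ennreal_mult_top top_unique)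
qed

theorem theorem3:
  fixes psi :: "real \<Rightarrow> real" and \<gamma> :: real and \<zeta>0 :: complex
  assumes "mono_on {-pi..pi} psi"
    and "0 \<le> \<gamma>" and "\<gamma> < 1"
    and "cmod \<zeta>0 = 1"
  defines "\<psi> \<equiv> circle_stieltjes_measure psi"
  shows
   "((\<forall>\<sigma>>1. \<exists>K>0. \<forall>chi. circle_borel_measure chi \<and> measure_prec chi \<psi> \<longrightarrow>
        (\<forall>z \<in> stolz_star \<sigma> \<zeta>0. cmod (frac_integral \<gamma> (herglotz chi) z) < K))
     \<longleftrightarrow>
     (\<forall>\<sigma>>1. \<exists>K>0. \<forall>chi. circle_borel_measure chi \<and> measure_prec chi \<psi> \<longrightarrow>
        (\<forall>z \<in> stolz_star \<sigma> \<zeta>0. \<bar>frac_integral \<gamma> (\<lambda>w. Im (herglotz chi w)) z\<bar> < K)))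
    \<and>
    ((\<forall>\<sigma>>1. \<exists>K>0. \<forall>chi. circle_borel_measure chi \<and> measure_prec chi \<psi> \<longrightarrow>
        (\<forall>z \<in> stolz_star \<sigma> \<zeta>0. \<bar>frac_integral \<gamma> (\<lambda>w. Im (herglotz chi w)) z\<bar> < K))
     \<longleftrightarrow>
     (\<integral>\<^sup>+ \<zeta>. inverse (ennreal (cmod (\<zeta>0 - \<zeta>) powr (1 - \<gamma>))) \<partial>\<psi>) < \<infinity>)"
  proof -
  let ?P = "circle_stieltjes_measure psi"
  let ?C1 = "\<forall>\<sigma>>1. \<exists>K>0. \<forall>chi. circle_borel_measure chi \<and> measure_prec chi \<psi> \<longrightarrow>
        (\<forall>z \<in> stolz_star \<sigma> \<zeta>0. cmod (frac_integral \<gamma> (herglotz chi) z) < K)"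
  let ?C2 = "\<forall>\<sigma>>1. \<exists>K>0. \<forall>chi. circle_borel_measure chi \<and> measure_prec chi \<psi> \<longrightarrow>
        (\<forall>z \<in> stolz_star \<sigma> \<zeta>0. \<bar>frac_integral \<gamma> (\<lambda>w. Im (herglotz chi w)) z\<bar> < K)"
  let ?C3 = "(\<integral>\<^sup>+ \<zeta>. inverse (ennreal (cmod (\<zeta>0 - \<zeta>) powr (1 - \<gamma>))) \<partial>\<psi>) < \<infinity>"
  have m: "mono_on {-pi..pi} psi" and g: "0 \<le> \<gamma>" "\<gamma> < 1" and z0: "cmod \<zeta>0 = 1"
    using assms by auto
  have i12: ?C2 if c1: ?C1
  proof (intro allI impI)
    fix \<sigma> :: real assume s: "1 < \<sigma>"
    obtain K where K: "K > 0" "\<forall>chi. circle_borel_measure chi \<and> measure_prec chi \<psi> \<longrightarrow>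
        (\<forall>z \<in> stolz_star \<sigma> \<zeta>0. cmod (frac_integral \<gamma> (herglotz chi) z) < K)"
      using c1 s by blast
    show "\<exists>K>0. \<forall>chi. circle_borel_measure chi \<and> measure_prec chi \<psi> \<longrightarrow>
        (\<forall>z \<in> stolz_star \<sigma> \<zeta>0. \<bar>frac_integral \<gamma> (\<lambda>w. Im (herglotz chi w)) z\<bar> < K)"
    proof (intro exI[of _ K] conjI allI impI ballI)
      show "0 < K" by (rule K(1))
      fix chi z assume c: "circle_borel_measure chi \<and> measure_prec chi \<psi>" and zs: "z \<in> stolz_star \<sigma> \<zeta>0"
      have gd: "good chi" using good_sub[OF m] c by (simp add: \<psi>_def)
      have z1: "cmod z < 1" using zs by (simp add: stolz_star_def stolz_def)
      have "\<bar>frac_integral \<gamma> (\<lambda>w. Im (herglotz chi w)) z\<bar> \<le> cmod (frac_integral \<gamma> (herglotz chi) z)"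
        by (rule one_two[OF gd z1 g(1)])
      also have "\<dots> < K" using K(2) c zs by blast
      finally show "\<bar>frac_integral \<gamma> (\<lambda>w. Im (herglotz chi w)) z\<bar> < K" .
    qed
  qed
  have i23: ?C3 if ?C2
    using two_three[OF m g z0] that by (simp add: \<psi>_def)
  have i31: ?C1 if c3: ?C3
  proof (intro allI impI)
    fix \<sigma> :: real assume s: "1 < \<sigma>"
    show "\<exists>K>0. \<forall>chi. circle_borel_measure chi \<and> measure_prec chi \<psi> \<longrightarrow>
        (\<forall>z \<in> stolz_star \<sigma> \<zeta>0. cmod (frac_integral \<gamma> (herglotz chi) z) < K)"
      using three_one[OF m g z0 _ s] c3 by (simp add: \<psi>_def)
  qed
  show ?thesis using i12 i23 i31 by blast
qed

end
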